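(* Let $t,t'$ be even integers and let $B'\in\mathcal X^{t',+}_{N-2}$, $B\in\mathcal X^{t,+}_{N-2}$ with $B'\preceq B$. If $t<0$, then $t'=t$ or $|t'|<|t|$.
   Context: Let $N\ge 3$ be an odd integer and $F=\mathbb Z/2\mathbb Z$. For integers $i,j$ let $[i,j]=\{h\in\mathbb Z: i\le h\le j\}$ (empty if $i>j$). Let $S_N=[1,N]$. The set of all subsets of $S_N$ is an $F$-vector space with sum $X+X'=(X\cup X')-(X\cap X')$; let $E_N$ be the subspace of subsets of even cardinality. A $2$-element subset $\{i,j\}\subseteq S_N$ is written $ij$ when either ($i<j$ and $j-i$ odd) or ($i>j$ and $i-j$ even); each $2$-element subset has exactly one such writing. Let $\mathcal P_N$ be the set of all finite sets $B$ of pairwise disjoint $2$-element subsets of $S_N$; for $B\in\mathcal P_N$ let $\langle B\rangle$ be the $F$-subspace of $E_N$ spanned by the elements of $B$, $\mathrm{supp}(B)=\bigcup_{X\in B}X$, $B^0=\{\{i,j\}\in B: i-j\text{ even}\}$, $B^1=\{\{i,j\}\in B: i-j\text{ odd}\}$. A set $X\subseteq S_N$ is $0$-covered (resp. $1$-covered) by $B^1$ if there are $a_1b_1,\dots,a_sb_s\in B^1$ ($s\ge 0$, so $a_r<b_r$) with $X=[a_1,b_1]\sqcup\dots\sqcup[a_s,b_s]$ (resp. $X=[a_1,b_1]\sqcup\dots\sqcup[a_s,b_s]\sqcup\{u\}$ for some $u$), disjoint unions. Let ${}^*\mathcal P_N$ be the set of $B\in\mathcal P_N$ such that: for every $ij\in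 B^1$ the set $[i+1,j-1]$ is $0$-covered by $B^1$; and there is a sequence $i_*(B)=(i_1,\dots,i_{2s})$ in $S_N$ with $B^0=\{i_{2s}i_1,i_{2s-1}i_2,\dots,i_{s+1}i_s\}$ (so $s=|B^0|$; the sequence is unique) such that, if $s\ge1$, each of $[i_1+1,i_2-1],\dots,[i_{s-1}+1,i_s-1],[i_{s+1}+1,i_{s+2}-1],\dots,[i_{2s-1}+1,i_{2s}-1]$ is $0$-covered by $B^1$. For $B\in{}^*\mathcal P_N$ with $i_*(B)=(i_1,\dots,i_{2s})$ consider: (I) $s=0$, or $s\ge1$ and $[1,i_1-1]$ and $[i_{2s}+1,N]$ are $0$-covered by $B^1$; (II) $N\notin\mathrm{supp}(B)$ and either $s=0$, or $s$ is odd and either (i) $[1,i_1-1]$ is $1$-covered and $[i_{2s}+1,N-1]$ is $0$-covered by $B^1$, or (ii) $[1,i_1-1]$ is $0$-covered and $[i_{2s}+1,N-1]$ is $1$-covered by $B^1$; (III) (I) holds and, if $s$ is even then $\{i,N\}\in B$ for some even $i$, if $s$ is odd then $\{i,N\}\in B$ for some odd $i$. Let $\mathcal X^+_{N-2}$, $\mathcal X^-_{N-2}$ be the sets of $B\in{}^*\mathcal P_N$ satisfying (II), (III) respectively, and $\mathcal X_{N-2}=\mathcal X^+_{N-2}\sqcup\mathcal X^-_{N-2}$. For $B\in\mathcal X^+_{N-2}$ with $s\ge1$ there is a unique $u_B$: in case (i), $u_B\in[1,i_1-1]$ with $[1,u_B-1]$, $[u_B+1,i_1-1]$ $0$-covered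 by $B^1$ ($u_B$ odd); in case (ii), $u_B\in[i_{2s}+1,N-1]$ with $[i_{2s}+1,u_B-1]$, $[u_B+1,N-1]$ $0$-covered by $B^1$ ($u_B$ even). For even $t$: $\mathcal X^{0,+}_{N-2}=\{B\in\mathcal X^+_{N-2}:|B^0|=0\}$; for $t\ge2$, $\mathcal X^{t,+}_{N-2}=\{B\in\mathcal X^+_{N-2}:|B^0|=t-1,\ u_B\text{ odd}\}$; for $t\le-2$, $\mathcal X^{t,+}_{N-2}=\{B\in\mathcal X^+_{N-2}:|B^0|=-t-1,\ u_B\text{ even}\}$. Put $[[ij]]=[i,j]$ if $i<j$ and $[[ij]]=[i,N]\cup[1,j]$ if $i>j$. For $B\in\mathcal X_{N-2}$ define ${}'\epsilon(B)\in E_N$: ${}'\epsilon(B)=\sum_{ij\in B}[[ij]]$ if $B\in\mathcal X^-_{N-2}$ or if $B\in\mathcal X^+_{N-2}$ with $|B^0|=0$; ${}'\epsilon(B)=\sum_{ij\in B}[[ij]]+[u_B,N]$ if $B\in\mathcal X^+_{N-2}$, $|B^0|$ odd, $u_B$ even; ${}'\epsilon(B)=\sum_{ij\in B}[[ij]]+\{N\}+[1,u_B]$ if $B\in\mathcal X^+_{N-2}$, $|B^0|$ odd, $u_B$ odd. For $B,B'\in\mathcal X_{N-2}$ write $B'\preceq B$ if there is a sequence $B'=B_0,\dots,B_h=B$ ($h\ge0$) in $\mathcal X_{N-2}$ with ${}'\epsilon(B_k)\in\langle B_{k+1}\rangle$ for $k=0,\dots,h-1$. *)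

theory Defs
  imports Main
begin

(* Elements of S_N = [1,N] are natural numbers; subsets of S_N are nat sets.
   The F-vector space of subsets: sum is symmetric difference. *)

definition sdiff :: "nat set \<Rightarrow> nat set \<Rightarrow> nat set" where
  "sdiff X Y = (X \<union> Y) - (X \<inter> Y)"

(* F-sum of the family f X, X \<in> B (B finite): x belongs iff it lies in an odd number of them *)
definition fsum :: "(nat set \<Rightarrow> nat set) \<Rightarrow> nat set set \<Rightarrow> nat set" where
  "fsum f B = {x. odd (card {X \<in> B. x \<in> f X})}"

definition span2 :: "nat set set \<Rightarrow> nat set set" where
  "span2 B = {fsum id C | C. C \<subseteq> B}"

definition PN :: "nat \<Rightarrow> nat set set \<Rightarrow> bool" where
  "PN N B \<longleftrightarrow> finite B \<and> (\<forall>X\<in>B. X \<subseteq> {1..N} \<and> card X = 2)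
     \<and> (\<forall>X\<in>B. \<forall>Y\<in>B. X \<noteq> Y \<longrightarrow> X \<inter> Y = {})"

definition supp :: "nat set set \<Rightarrow> nat set" where
  "supp B = \<Union>B"

definition B0 :: "nat set set \<Rightarrow> nat set set" where
  "B0 B = {X \<in> B. \<exists>i j. X = {i, j} \<and> i \<noteq> j \<and> even (int i - int j)}"

definition B1 :: "nat set set \<Rightarrow> nat set set" where
  "B1 B = {X \<in> B. \<exists>i j. X = {i, j} \<and> i \<noteq> j \<and> odd (int i - int j)}"

definition wr :: "nat set \<Rightarrow> nat \<times> nat" where
  "wr X = (if odd (int (Max X) - int (Min X)) then (Min X, Max X) else (Max X, Min X))"

definition ival :: "nat set \<Rightarrow> nat set" where
  "ival X = {Min X..Max X}"

definition cov0 :: "nat set set \<Rightarrow> nat set \<Rightarrow> bool" where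
  "cov0 B X \<longleftrightarrow> (\<exists>C \<subseteq> B1 B. (\<forall>p\<in>C. \<forall>q\<in>C. p \<noteq> q \<longrightarrow> ival p \<inter> ival q = {})
       \<and> X = \<Union>(ival ` C))"

definition cov1 :: "nat set set \<Rightarrow> nat set \<Rightarrow> bool" where
  "cov1 B X \<longleftrightarrow> (\<exists>C \<subseteq> B1 B. \<exists>u. (\<forall>p\<in>C. \<forall>q\<in>C. p \<noteq> q \<longrightarrow> ival p \<inter> ival q = {})
       \<and> u \<notin> \<Union>(ival ` C) \<and> X = \<Union>(ival ` C) \<union> {u})"

(* xs = (i_1,...,i_{2s}) (0-indexed list), an increasing sequence in S_N with
   B^0 = {i_{2s}i_1, ..., i_{s+1}i_s} and the intermediate intervals 0-covered *)
definition seq_ok :: "nat \<Rightarrow> nat set set \<Rightarrow> nat list \<Rightarrow> bool" where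
  "seq_ok N B xs \<longleftrightarrow> (let s = length xs div 2 in
      even (length xs) \<and> sorted_wrt (<) xs \<and> set xs \<subseteq> {1..N}
      \<and> B0 B = {{xs ! (2*s - 1 - k), xs ! k} | k. k < s}
      \<and> (\<forall>k. k + 1 < 2*s \<and> k \<noteq> s - 1 \<longrightarrow> cov0 B {xs ! k + 1 .. xs ! (k+1) - 1}))"

definition starP :: "nat \<Rightarrow> nat set set \<Rightarrow> bool" where
  "starP N B \<longleftrightarrow> PN N B
     \<and> (\<forall>X\<in>B1 B. cov0 B {Min X + 1 .. Max X - 1})
     \<and> (\<exists>xs. seq_ok N B xs)"

definition istar :: "nat \<Rightarrow> nat set set \<Rightarrow> nat list" where
  "istar N B = (THE xs. seq_ok N B xs)"

definition condI :: "nat \<Rightarrow> nat set set \<Rightarrow> bool" where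
  "condI N B \<longleftrightarrow> (let xs = istar N B; s = card (B0 B) in
     s = 0 \<or> (s \<ge> 1 \<and> cov0 B {1 .. hd xs - 1} \<and> cov0 B {last xs + 1 .. N}))"

definition caseI :: "nat \<Rightarrow> nat set set \<Rightarrow> bool" where
  "caseI N B \<longleftrightarrow> (let xs = istar N B in
     cov1 B {1 .. hd xs - 1} \<and> cov0 B {last xs + 1 .. N - 1})"

definition caseII :: "nat \<Rightarrow> nat set set \<Rightarrow> bool" where
  "caseII N B \<longleftrightarrow> (let xs = istar N B in
     cov0 B {1 .. hd xs - 1} \<and> cov1 B {last xs + 1 .. N - 1})"

definition condII :: "nat \<Rightarrow> nat set set \<Rightarrow> bool" where
  "condII N B \<longleftrightarrow> N \<notin> supp B \<and> (let s = card (B0 B) in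
     s = 0 \<or> (odd s \<and> (caseI N B \<or> caseII N B)))"

definition condIII :: "nat \<Rightarrow> nat set set \<Rightarrow> bool" where
  "condIII N B \<longleftrightarrow> condI N B \<and> (let s = card (B0 B) in
     (even s \<longrightarrow> (\<exists>i. even i \<and> {i, N} \<in> B)) \<and> (odd s \<longrightarrow> (\<exists>i. odd i \<and> {i, N} \<in> B)))"

definition Xplus :: "nat \<Rightarrow> nat set set set" where
  "Xplus N = {B. starP N B \<and> condII N B}"

definition Xminus :: "nat \<Rightarrow> nat set set set" where
  "Xminus N = {B. starP N B \<and> condIII N B}"

definition XX :: "nat \<Rightarrow> nat set set set" where
  "XX N = Xplus N \<union> Xminus N"

(* u_B for B \<in> X^+ with s \<ge> 1 *)
definition uB :: "nat \<Rightarrow> nat set set \<Rightarrow> nat" where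
  "uB N B = (let xs = istar N B in THE u.
      (caseI N B \<and> u \<in> {1 .. hd xs - 1} \<and> cov0 B {1 .. u - 1} \<and> cov0 B {u + 1 .. hd xs - 1})
    \<or> (caseII N B \<and> u \<in> {last xs + 1 .. N - 1} \<and> cov0 B {last xs + 1 .. u - 1} \<and> cov0 B {u + 1 .. N - 1}))"

definition Xtp :: "nat \<Rightarrow> int \<Rightarrow> nat set set set" where
  "Xtp N t = {B \<in> Xplus N.
      (t = 0 \<and> card (B0 B) = 0)
    \<or> (t \<ge> 2 \<and> int (card (B0 B)) = t - 1 \<and> odd (uB N B))
    \<or> (t \<le> -2 \<and> int (card (B0 B)) = - t - 1 \<and> even (uB N B))}"

definition dbr :: "nat \<Rightarrow> nat set \<Rightarrow> nat set" where
  "dbr N X = (case wr X of (i, j) \<Rightarrow> if i < j then {i..j} else {i..N} \<union> {1..j})"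

definition eps' :: "nat \<Rightarrow> nat set set \<Rightarrow> nat set" where
  "eps' N B = (if B \<in> Xminus N \<or> (B \<in> Xplus N \<and> card (B0 B) = 0) then fsum (dbr N) B
     else if B \<in> Xplus N \<and> odd (card (B0 B)) \<and> even (uB N B)
       then sdiff (fsum (dbr N) B) {uB N B .. N}
     else if B \<in> Xplus N \<and> odd (card (B0 B)) \<and> odd (uB N B)
       then sdiff (sdiff (fsum (dbr N) B) {N}) {1 .. uB N B}
     else undefined)"

definition step :: "nat \<Rightarrow> nat set set \<Rightarrow> nat set set \<Rightarrow> bool" where
  "step N A C \<longleftrightarrow> A \<in> XX N \<and> C \<in> XX N \<and> eps' N A \<in> span2 C"

definition preceq :: "nat \<Rightarrow> nat set set \<Rightarrow> nat set set \<Rightarrow> bool" where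
  "preceq N B' B \<longleftrightarrow> B' \<in> XX N \<and> B \<in> XX N \<and> (step N)\<^sup>*\<^sup>* B' B"

end

theory Submission
  imports Defs
begin

definition w :: "nat \<Rightarrow> int" where "w y = (if odd y then 1 else -1)"
definition dd :: "nat set \<Rightarrow> int" where "dd E = (\<Sum>y\<in>E. w y)"

lemma card2E:
  assumes "card X = 2"
  obtains a b where "X = {a,b}" "a < b" "Min X = a" "Max X = b"
proof -
  obtain x y where xy: "X = {x,y}" "x \<noteq> y" using card_2_iff[THEN iffD1, OF assms] by blast
  show ?thesis
  proof (cases "x < y")
    case True
    have "Min {x,y} = x" "Max {x,y} = y" using True by auto
    then show ?thesis using that[of x y] xy True by simp
  next
    case False
    then have F: "y < x" using xy by auto
    have "Min {x,y} = y" "Max {x,y} = x" using F by auto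
    moreover have "X = {y,x}" using xy by auto
    ultimately show ?thesis using that[of y x] xy F by simp
  qed
qed

lemma PN_fin: "PN N B \<Longrightarrow> finite B" by (simp add: PN_def)
lemma PN_sub: "PN N B \<Longrightarrow> X \<in> B \<Longrightarrow> X \<subseteq> {1..N}" by (simp add: PN_def)
lemma PN_card: "PN N B \<Longrightarrow> X \<in> B \<Longrightarrow> card X = 2" by (simp add: PN_def)
lemma PN_disj: "PN N B \<Longrightarrow> X \<in> B \<Longrightarrow> Y \<in> B \<Longrightarrow> X \<noteq> Y \<Longrightarrow> X \<inter> Y = {}"
  by (simp add: PN_def)

lemma pairE:
  assumes "PN N B" "X \<in> B"
  obtains a b where "X = {a,b}" "a < b" "Min X = a" "Max X = b"
  by (rule card2E[OF PN_card[OF assms]])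

lemma B1_sub: "B1 B \<subseteq> B" by (auto simp: B1_def)
lemma B0_sub: "B0 B \<subseteq> B" by (auto simp: B0_def)

lemma odd_int_diff: "i \<le> j \<Longrightarrow> odd (int j - int i) \<longleftrightarrow> odd (j - i)"
  by presburger

lemma odd_int_sym: "odd (int i - int j) \<longleftrightarrow> odd (int j - int i)"
  by presburger

lemma B1_iff:
  assumes "PN N B" "X \<in> B"
  shows "X \<in> B1 B \<longleftrightarrow> odd (Max X - Min X)"
proof -
  obtain a b where c: "X = {a,b}" "a < b" "Min X = a" "Max X = b"
    by (rule pairE[OF assms])
  have "X \<in> B1 B \<longleftrightarrow> odd (int b - int a)"
  proof
    assume "X \<in> B1 B"
    then obtain i j where ij: "X = {i,j}" "i \<noteq> j" "odd (int i - int j)" by (auto simp: B1_def)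
    have "{i,j} = {a,b}" using ij(1) c(1) by simp
    then have "(i = a \<and> j = b) \<or> (i = b \<and> j = a)" by (simp add: doubleton_eq_iff)
    then show "odd (int b - int a)"
    proof
      assume "i = a \<and> j = b"
      then show ?thesis using ij(3) odd_int_sym[of a b] by simp
    next
      assume "i = b \<and> j = a"
      then show ?thesis using ij(3) by simp
    qed
  next
    assume "odd (int b - int a)"
    then show "X \<in> B1 B" using assms(2) c unfolding B1_def by auto
  qed
  then show ?thesis using odd_int_diff c by auto
qed

lemma B0_iff:
  assumes "PN N B" "X \<in> B"
  shows "X \<in> B0 B \<longleftrightarrow> even (Max X - Min X)"
proof -
  obtain a b where c: "X = {a,b}" "a < b" "Min X = a" "Max X = b"
    by (rule pairE[OF assms])
  have "X \<in> B0 B \<longleftrightarrow> even (int b - int a)"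
  proof
    assume "X \<in> B0 B"
    then obtain i j where ij: "X = {i,j}" "i \<noteq> j" "even (int i - int j)" by (auto simp: B0_def)
    have "{i,j} = {a,b}" using ij(1) c(1) by simp
    then have "(i = a \<and> j = b) \<or> (i = b \<and> j = a)" by (simp add: doubleton_eq_iff)
    then show "even (int b - int a)"
    proof
      assume "i = a \<and> j = b"
      then show ?thesis using ij(3) odd_int_sym[of a b] by simp
    next
      assume "i = b \<and> j = a"
      then show ?thesis using ij(3) by simp
    qed
  next
    assume "even (int b - int a)"
    then show "X \<in> B0 B" using assms(2) c unfolding B0_def by auto
  qed
  then show ?thesis using odd_int_diff c by auto
qed

lemma B01: "PN N B \<Longrightarrow> X \<in> B \<Longrightarrow> X \<in> B0 B \<or> X \<in> B1 B"
proof -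
  assume a: "PN N B" "X \<in> B"
  have "even (Max X - Min X) \<or> odd (Max X - Min X)" by blast
  then show ?thesis using B0_iff[OF a] B1_iff[OF a] by blast
qed
lemma B01': "PN N B \<Longrightarrow> X \<in> B0 B \<Longrightarrow> X \<notin> B1 B"
proof -
  assume a: "PN N B" "X \<in> B0 B"
  then have b: "X \<in> B" using B0_sub by blast
  show ?thesis using B0_iff[OF a(1) b] B1_iff[OF a(1) b] a(2) by blast
qed

lemma dbr_B1:
  assumes "PN N B" "X \<in> B1 B"
  shows "dbr N X = {Min X..Max X}"
proof -
  have XB: "X \<in> B" using assms B1_sub by auto
  obtain a b where c: "X = {a,b}" "a < b" "Min X = a" "Max X = b"
    by (rule pairE[OF assms(1) XB])
  have "odd (b - a)" using B1_iff assms XB c by auto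
  then have "odd (int b - int a)" using odd_int_diff c by auto
  then show ?thesis using c by (simp add: dbr_def wr_def)
qed

lemma dbr_B0:
  assumes "PN N B" "X \<in> B0 B"
  shows "dbr N X = {Max X..N} \<union> {1..Min X}"
proof -
  have XB: "X \<in> B" using assms B0_sub by auto
  obtain a b where c: "X = {a,b}" "a < b" "Min X = a" "Max X = b"
    by (rule pairE[OF assms(1) XB])
  have "even (b - a)" using B0_iff assms XB c by auto
  then have "even (int b - int a)" using odd_int_diff c by auto
  then show ?thesis using c by (simp add: dbr_def wr_def)
qed

lemma cov0E:
  assumes "cov0 B I"
  obtains Cc where "Cc \<subseteq> B1 B" "I = \<Union>(ival ` Cc)"
    "\<forall>p\<in>Cc. \<forall>q\<in>Cc. p \<noteq> q \<longrightarrow> ival p \<inter> ival q = {}"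
  using assms unfolding cov0_def by (elim exE conjE) (rule that)

lemma starP_PN: "starP N B \<Longrightarrow> PN N B" by (simp add: starP_def)

lemma interior:
  assumes st: "starP N B" and X: "X \<in> B1 B" and z: "Min X < z" "z < Max X"
  shows "\<exists>Y\<in>B1 B. z \<in> Y"
  using X z
proof (induction "Max X - Min X" arbitrary: X z rule: less_induct)
  case less
  have pn: "PN N B" using st starP_PN by auto
  have "cov0 B {Min X + 1 .. Max X - 1}" using st less.prems(1) unfolding starP_def by blast
  then obtain Cc where Cc: "Cc \<subseteq> B1 B" "{Min X+1..Max X-1} = \<Union>(ival ` Cc)"
    and "\<forall>p\<in>Cc. \<forall>q\<in>Cc. p \<noteq> q \<longrightarrow> ival p \<inter> ival q = {}"
    by (rule cov0E)
  have "z \<in> {Min X+1..Max X-1}" using less.prems by auto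
  then have "z \<in> \<Union>(ival ` Cc)" unfolding Cc(2) .
  then obtain p where p: "p \<in> Cc" "z \<in> ival p" by blast
  have pB1: "p \<in> B1 B" using p Cc by auto
  obtain a b where pe: "p = {a,b}" "a < b" "Min p = a" "Max p = b"
    by (rule pairE[OF pn subsetD[OF B1_sub pB1]])
  show ?case
  proof (cases "z = a \<or> z = b")
    case True then have "z \<in> p" using pe by auto
    then show ?thesis using pB1 by blast
  next
    case False
    with p pe have zz: "Min p < z" "z < Max p" by (auto simp: ival_def)
    have "ival p \<subseteq> {Min X+1..Max X-1}" using Cc p by auto
    then have "Min X < Min p" "Max p < Max X" using pe unfolding ival_def by auto
    then have "Max p - Min p < Max X - Min X" using zz by linarith
    then show ?thesis using less.hyps[OF _ pB1 zz] by blast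
  qed
qed

lemma ival_sub: "starP N B \<Longrightarrow> X \<in> B1 B \<Longrightarrow> ival X \<subseteq> \<Union>(B1 B)"
proof
  fix z assume st: "starP N B" and X: "X \<in> B1 B" and z: "z \<in> ival X"
  obtain a b where pe: "X = {a,b}" "a < b" "Min X = a" "Max X = b"
    by (rule pairE[OF starP_PN[OF st] subsetD[OF B1_sub X]])
  show "z \<in> \<Union>(B1 B)"
  proof (cases "z = a \<or> z = b")
    case True then have "z \<in> X" using pe by auto
    then show ?thesis using X by blast
  next
    case False
    then have "Min X < z" "z < Max X" using z pe by (auto simp: ival_def)
    then show ?thesis using interior[OF st X] by blast
  qed
qed

lemma cov0_sub: "starP N B \<Longrightarrow> cov0 B I \<Longrightarrow> I \<subseteq> \<Union>(B1 B)"
proof -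
  assume st: "starP N B" and cv: "cov0 B I"
  from cv obtain Cc where Cc: "Cc \<subseteq> B1 B" "I = \<Union>(ival ` Cc)"
    and "\<forall>p\<in>Cc. \<forall>q\<in>Cc. p \<noteq> q \<longrightarrow> ival p \<inter> ival q = {}" by (rule cov0E)
  show ?thesis unfolding Cc(2) using Cc(1) ival_sub[OF st] by blast
qed

lemma nocross:
  assumes st: "starP N B" and X: "X \<in> B1 B" and Y: "Y \<in> B1 B"
    and h: "Min X < Min Y" "Min Y < Max X" "Max X < Max Y"
  shows False
  using X h
proof (induction "Max X - Min X" arbitrary: X rule: less_induct)
  case less
  have pn: "PN N B" using st starP_PN by auto
  have "cov0 B {Min X + 1 .. Max X - 1}" using st less.prems(1) unfolding starP_def by blast
  then obtain Cc where Cc: "Cc \<subseteq> B1 B" "{Min X+1..Max X-1} = \<Union>(ival ` Cc)"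
    and "\<forall>p\<in>Cc. \<forall>q\<in>Cc. p \<noteq> q \<longrightarrow> ival p \<inter> ival q = {}"
    by (rule cov0E)
  have "Min Y \<in> {Min X+1..Max X-1}" using less.prems by auto
  then have "Min Y \<in> \<Union>(ival ` Cc)" unfolding Cc(2) .
  then obtain p where p: "p \<in> Cc" "Min Y \<in> ival p" by blast
  have pB1: "p \<in> B1 B" using p Cc by auto
  obtain a b where pe: "p = {a,b}" "a < b" "Min p = a" "Max p = b"
    by (rule pairE[OF pn subsetD[OF B1_sub pB1]])
  obtain c d where Ye: "Y = {c,d}" "c < d" "Min Y = c" "Max Y = d"
    by (rule pairE[OF pn subsetD[OF B1_sub Y]])
  have sub: "ival p \<subseteq> {Min X+1..Max X-1}" using Cc p by auto
  show ?case
  proof (cases "p = Y")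
    case True
    then have "Max Y \<in> ival p" using Ye by (auto simp: ival_def)
    then show ?thesis using sub less.prems by auto
  next
    case False
    then have "p \<inter> Y = {}" using PN_disj[OF pn] pB1 Y B1_sub by blast
    then have "c \<noteq> a" "c \<noteq> b" using pe Ye by auto
    then have zz: "Min p < Min Y" "Min Y < Max p" using p pe Ye by (auto simp: ival_def)
    have "Min X < Min p" "Max p < Max X" using sub pe unfolding ival_def by auto
    then have "Max p - Min p < Max X - Min X" using zz by linarith
    moreover have "Max p < Max Y" using \<open>Max p < Max X\<close> less.prems by linarith
    ultimately show ?thesis using less.hyps[OF _ pB1 zz] by blast
  qed
qed


lemma B1_card_even:
  assumes pn: "PN N B" and p: "p \<in> B1 B"
  shows "even (card (ival p))"
proof -
  have pB: "p \<in> B" using p B1_sub by blast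
  obtain a b where pe: "p = {a,b}" "a < b" "Min p = a" "Max p = b" by (rule pairE[OF pn pB])
  have "odd (b - a)" using B1_iff[OF pn pB] p pe by simp
  moreover have "card (ival p) = Suc b - a" using pe by (simp add: ival_def)
  ultimately show ?thesis using pe(2) by presburger
qed

lemma cov0_even:
  assumes pn: "PN N B" and cv: "cov0 B I"
  shows "even (card I)"
proof -
  obtain Cc where Cc: "Cc \<subseteq> B1 B" "I = \<Union>(ival ` Cc)"
    "\<forall>p\<in>Cc. \<forall>q\<in>Cc. p \<noteq> q \<longrightarrow> ival p \<inter> ival q = {}" using cv by (rule cov0E)
  have "finite (B1 B)" using rev_finite_subset[OF PN_fin[OF pn] B1_sub] .
  then have fin: "finite Cc" using finite_subset[OF Cc(1)] by blast
  have fi: "\<forall>p\<in>Cc. finite (ival p)" by (simp add: ival_def)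
  have cI: "card I = (\<Sum>p\<in>Cc. card (ival p))" unfolding Cc(2) using card_UN_disjoint[OF fin fi Cc(3)] .
  have "\<And>p. p \<in> Cc \<Longrightarrow> 2 dvd card (ival p)" using B1_card_even[OF pn] Cc(1) by blast
  then have "2 dvd (\<Sum>p\<in>Cc. card (ival p))" by (rule dvd_sum)
  then show ?thesis using cI by simp
qed

lemma cov1E:
  assumes "cov1 B I"
  obtains Cc u where "Cc \<subseteq> B1 B" "\<forall>p\<in>Cc. \<forall>q\<in>Cc. p \<noteq> q \<longrightarrow> ival p \<inter> ival q = {}"
    "u \<notin> \<Union>(ival ` Cc)" "I = \<Union>(ival ` Cc) \<union> {u}"
  using assms unfolding cov1_def by (elim exE conjE) (rule that)

lemma cov1_split:
  assumes pn: "PN N B" and cv: "cov1 B {lo..hi}" and lo: "1 \<le> lo"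
  obtains u where "lo \<le> u" "u \<le> hi" "cov0 B {lo..u-1}" "cov0 B {u+1..hi}"
proof -
  obtain Cc u where Cc: "Cc \<subseteq> B1 B" "\<forall>p\<in>Cc. \<forall>q\<in>Cc. p \<noteq> q \<longrightarrow> ival p \<inter> ival q = {}"
    "u \<notin> \<Union>(ival ` Cc)" "{lo..hi} = \<Union>(ival ` Cc) \<union> {u}" using cv by (rule cov1E)
  have u: "u \<in> {lo..hi}" using Cc(4) by blast
  define C1 where "C1 = {p\<in>Cc. Max p < u}"
  define C2 where "C2 = {p\<in>Cc. u < Min p}"
  have spl: "p \<in> C1 \<or> p \<in> C2" if "p \<in> Cc" for p
  proof -
    have "u \<notin> ival p" using Cc(3) that by blast
    then show ?thesis using that unfolding C1_def C2_def ival_def by auto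
  qed
  have ivsub: "ival p \<subseteq> {lo..hi}" if "p \<in> Cc" for p using Cc(4) that by blast
  have c1: "cov0 B {lo..u-1}" unfolding cov0_def
  proof (intro exI[of _ C1] conjI)
    show "C1 \<subseteq> B1 B" using Cc(1) unfolding C1_def by blast
    show "\<forall>p\<in>C1. \<forall>q\<in>C1. p \<noteq> q \<longrightarrow> ival p \<inter> ival q = {}" using Cc(2) unfolding C1_def by blast
    show "{lo..u - 1} = \<Union> (ival ` C1)"
    proof
      show "{lo..u - 1} \<subseteq> \<Union> (ival ` C1)"
      proof
        fix z assume z: "z \<in> {lo..u-1}"
        then have "z \<in> {lo..hi}" "z \<noteq> u" using u lo by auto
        then have "z \<in> \<Union>(ival ` Cc)" using Cc(4) by blast
        then obtain p where p: "p \<in> Cc" "z \<in> ival p" by blast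
        have "p \<in> C1"
        proof (rule ccontr)
          assume "p \<notin> C1"
          then have "u < Min p" using spl[OF p(1)] unfolding C2_def by blast
          then show False using p(2) z lo u unfolding ival_def by auto
        qed
        then show "z \<in> \<Union> (ival ` C1)" using p(2) by blast
      qed
      show "\<Union> (ival ` C1) \<subseteq> {lo..u - 1}"
      proof
        fix z assume "z \<in> \<Union> (ival ` C1)"
        then obtain p where p: "p \<in> C1" "z \<in> ival p" by blast
        then have "z \<in> {lo..hi}" using ivsub unfolding C1_def by blast
        moreover have "z < u" using p unfolding C1_def ival_def by auto
        ultimately show "z \<in> {lo..u-1}" by auto
      qed
    qed
  qed
  have c2: "cov0 B {u+1..hi}" unfolding cov0_def
  proof (intro exI[of _ C2] conjI)
    show "C2 \<subseteq> B1 B" using Cc(1) unfolding C2_def by blast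
    show "\<forall>p\<in>C2. \<forall>q\<in>C2. p \<noteq> q \<longrightarrow> ival p \<inter> ival q = {}" using Cc(2) unfolding C2_def by blast
    show "{u+1..hi} = \<Union> (ival ` C2)"
    proof
      show "{u+1..hi} \<subseteq> \<Union> (ival ` C2)"
      proof
        fix z assume z: "z \<in> {u+1..hi}"
        then have "z \<in> {lo..hi}" "z \<noteq> u" using u lo by auto
        then have "z \<in> \<Union>(ival ` Cc)" using Cc(4) by blast
        then obtain p where p: "p \<in> Cc" "z \<in> ival p" by blast
        have "p \<in> C2"
        proof (rule ccontr)
          assume "p \<notin> C2"
          then have "Max p < u" using spl[OF p(1)] unfolding C1_def by blast
          then show False using p(2) z unfolding ival_def by auto
        qed
        then show "z \<in> \<Union> (ival ` C2)" using p(2) by blast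
      qed
      show "\<Union> (ival ` C2) \<subseteq> {u+1..hi}"
      proof
        fix z assume "z \<in> \<Union> (ival ` C2)"
        then obtain p where p: "p \<in> C2" "z \<in> ival p" by blast
        then have "z \<in> {lo..hi}" using ivsub unfolding C2_def by blast
        moreover have "u < z" using p unfolding C2_def ival_def by auto
        ultimately show "z \<in> {u+1..hi}" by auto
      qed
    qed
  qed
  show ?thesis using that[of u] u c1 c2 by auto
qed

lemma cov1_odd:
  assumes pn: "PN N B" and cv: "cov1 B {lo..hi}" and lo: "1 \<le> lo"
  shows "odd (card {lo..hi})"
proof -
  obtain u where u: "lo \<le> u" "u \<le> hi" "cov0 B {lo..u-1}" "cov0 B {u+1..hi}"
    by (rule cov1_split[OF pn cv lo])
  have "even (card {lo..u-1})" by (rule cov0_even[OF pn u(3)])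
  then have e1: "even (u - lo)" using u(1) lo by simp
  have "even (card {u+1..hi})" by (rule cov0_even[OF pn u(4)])
  then have e2: "even (hi - u)" by simp
  show ?thesis using e1 e2 u(1,2) by simp
qed


lemma parity_step:
  fixes a b :: nat
  assumes "even (card {a+1..b-1})" "a < b"
  shows "b mod 2 \<noteq> a mod 2"
proof -
  have "card {a+1..b-1} = b - a - 1" using assms(2) by simp
  then have "even (b - a - 1)" using assms(1) by simp
  then show ?thesis using assms(2) by presburger
qed

lemma parity_step2:
  fixes a b c k :: nat
  assumes "b mod 2 \<noteq> a mod 2" "a mod 2 = (c + k) mod 2"
  shows "b mod 2 = (c + (k+1)) mod 2"
  using assms by presburger

lemma alt_sum: "(\<Sum>k<s. (-1::int)^k) = (if odd s then 1 else 0)"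
  by (induction s) auto

lemma T_closed: "(\<Sum>k<s. if odd (s-k) then (-1::int)^k else 0)
   = (if odd s then int ((s+1) div 2) else - int (s div 2))"
proof (induction s)
  case 0 then show ?case by simp
next
  case (Suc s)
  have a: "(\<Sum>k<s. if odd (Suc s - k) then (-1::int)^k else 0)
      = (\<Sum>k<s. (-1::int)^k - (if odd (s-k) then (-1::int)^k else 0))"
  proof (rule sum.cong[OF refl])
    fix k assume "k \<in> {..<s}"
    then have "Suc s - k = Suc (s - k)" by auto
    then show "(if odd (Suc s - k) then (-1::int)^k else 0)
       = (-1::int)^k - (if odd (s-k) then (-1::int)^k else 0)" by simp
  qed
  have "(\<Sum>k<Suc s. if odd (Suc s - k) then (-1::int)^k else 0)
      = (\<Sum>k<s. if odd (Suc s - k) then (-1::int)^k else 0) + (-1)^s"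
    by simp
  also have "\<dots> = (\<Sum>k<s. (-1::int)^k) - (\<Sum>k<s. if odd (s-k) then (-1::int)^k else 0) + (-1)^s"
    unfolding a by (simp add: sum_subtractf)
  finally have e: "(\<Sum>k<Suc s. if odd (Suc s - k) then (-1::int)^k else 0)
      = (if odd s then 1 else 0) - (if odd s then int ((s+1) div 2) else - int (s div 2)) + (-1)^s"
    unfolding alt_sum Suc.IH .
  show ?case
  proof (cases "odd s")
    case True
    from True obtain m where m: "s = 2*m+1" by (rule oddE)
    have p: "(-1::int)^s = -1" using True by simp
    have d: "(s+1) div 2 = m+1" "(Suc s + 1) div 2 = m + 1" "Suc s div 2 = m+1" using m by simp_all
    have "odd s" "\<not> odd (Suc s)" using True by simp_all
    then show ?thesis unfolding e p d by simp
  next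
    case False
    have "even s" using False by simp
    then obtain m where m: "s = 2*m" by (rule evenE)
    have p: "(-1::int)^s = 1" using False by simp
    have d: "s div 2 = m" "(Suc s + 1) div 2 = m + 1" using m by simp_all
    have "\<not> odd s" "odd (Suc s)" using False by simp_all
    then show ?thesis unfolding e p d by simp
  qed
qed

lemma alt_bounds: "K \<subseteq> {..<s} \<Longrightarrow>
   - int (s div 2) \<le> (\<Sum>k\<in>K. (-1::int)^k) \<and> (\<Sum>k\<in>K. (-1::int)^k) \<le> int ((s+1) div 2)"
proof (induction s arbitrary: K)
  case 0 then show ?case by simp
next
  case (Suc s)
  have K': "K - {s} \<subseteq> {..<s}" using Suc.prems by auto
  have ih: "- int (s div 2) \<le> (\<Sum>k\<in>K - {s}. (-1::int)^k) \<and> (\<Sum>k\<in>K - {s}. (-1::int)^k) \<le> int ((s+1) div 2)"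
    using Suc.IH[OF K'] .
  have finK: "finite K" using Suc.prems finite_subset by blast
  have e: "(\<Sum>k\<in>K. (-1::int)^k) = (\<Sum>k\<in>K - {s}. (-1::int)^k) + (if s \<in> K then (-1)^s else 0)"
  proof (cases "s \<in> K")
    case True
    then show ?thesis using sum.remove[OF finK True, of "\<lambda>k. (-1::int)^k"] by simp
  next
    case False
    then show ?thesis by simp
  qed
  show ?case
  proof (cases "odd s")
    case True
    from True obtain m where m: "s = 2*m+1" by (rule oddE)
    have p: "(-1::int)^s = -1" using True by simp
    have d: "s div 2 = m" "(s+1) div 2 = m+1" "(Suc s + 1) div 2 = m + 1" "Suc s div 2 = m+1"
      using m by simp_all
    show ?thesis unfolding e p d using ih unfolding d by (cases "s \<in> K") simp_all
  next
    case False
    have "even s" using False by simp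
    then obtain m where m: "s = 2*m" by (rule evenE)
    have p: "(-1::int)^s = 1" using False by simp
    have d: "s div 2 = m" "(s+1) div 2 = m" "(Suc s + 1) div 2 = m + 1" "Suc s div 2 = m"
      using m by simp_all
    show ?thesis unfolding e p d using ih unfolding d by (cases "s \<in> K") simp_all
  qed
qed

locale SB =
  fixes N :: nat and B :: "nat set set" and xs :: "nat list" and s :: nat
  assumes st: "starP N B" and sq: "seq_ok N B xs" and s_def: "s = length xs div 2"
begin

lemma pn: "PN N B" using st by (rule starP_PN)

lemma sq_unf: "even (length xs) \<and> sorted_wrt (<) xs \<and> set xs \<subseteq> {1..N}
      \<and> B0 B = {{xs ! (2*s - 1 - k), xs ! k} | k. k < s}
      \<and> (\<forall>k. k + 1 < 2*s \<and> k \<noteq> s - 1 \<longrightarrow> cov0 B {xs ! k + 1 .. xs ! (k+1) - 1})"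
  using sq unfolding seq_ok_def Let_def s_def .

lemma len: "length xs = 2*s"
  using sq_unf s_def even_two_times_div_two by metis

lemma srt: "sorted_wrt (<) xs" using sq_unf by blast
lemma setxs: "set xs \<subseteq> {1..N}" using sq_unf by blast
lemma B0eq: "B0 B = {{xs ! (2*s - 1 - k), xs ! k} | k. k < s}" using sq_unf by blast
lemma gaps: "k + 1 < 2*s \<Longrightarrow> k \<noteq> s - 1 \<Longrightarrow> cov0 B {xs ! k + 1 .. xs ! (k+1) - 1}"
  using sq_unf by blast

lemma nth_less: "i < j \<Longrightarrow> j < 2*s \<Longrightarrow> xs!i < xs!j"
  using sorted_wrt_iff_nth_less[THEN iffD1, OF srt] len by auto

lemma nth_less_iff: "i < 2*s \<Longrightarrow> j < 2*s \<Longrightarrow> xs!i < xs!j \<longleftrightarrow> i < j"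
proof -
  assume a: "i < 2*s" "j < 2*s"
  show ?thesis
  proof (cases "i < j")
    case True then show ?thesis using nth_less a by auto
  next
    case False
    then have "j < i \<or> j = i" by auto
    then show ?thesis
    proof
      assume "j < i" then have "xs!j < xs!i" using nth_less a by auto
      then show ?thesis using False by auto
    qed (use False in auto)
  qed
qed

lemma nth_le_iff: "i < 2*s \<Longrightarrow> j < 2*s \<Longrightarrow> xs!i \<le> xs!j \<longleftrightarrow> i \<le> j"
  using nth_less_iff[of j i] by auto

lemma nth_inj: "i < 2*s \<Longrightarrow> j < 2*s \<Longrightarrow> xs!i = xs!j \<Longrightarrow> i = j"
  using nth_le_iff[of i j] nth_le_iff[of j i] by auto

lemma nth_range: "i < 2*s \<Longrightarrow> xs!i \<in> {1..N}"
  using setxs nth_mem len by (metis subsetD)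

definition pr :: "nat \<Rightarrow> nat set" where "pr k = {xs!(2*s-1-k), xs!k}"

lemma B0_pr: "B0 B = pr ` {..<s}"
  unfolding B0eq pr_def by auto

lemma pr_lt: "k < s \<Longrightarrow> xs!k < xs!(2*s-1-k)"
  using nth_less by auto

lemma pr_min: "k < s \<Longrightarrow> Min (pr k) = xs!k"
proof -
  assume k: "k < s"
  have "xs!k < xs!(2*s-1-k)" using pr_lt k .
  then show ?thesis unfolding pr_def by (simp add: min_def)
qed
lemma pr_max: "k < s \<Longrightarrow> Max (pr k) = xs!(2*s-1-k)"
proof -
  assume k: "k < s"
  have "xs!k < xs!(2*s-1-k)" using pr_lt k .
  then show ?thesis unfolding pr_def by (simp add: max_def)
qed

lemma pr_B0: "k < s \<Longrightarrow> pr k \<in> B0 B" unfolding B0_pr by blast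
lemma pr_B: "k < s \<Longrightarrow> pr k \<in> B" using pr_B0 B0_sub by blast

lemma pr_inj: "inj_on pr {..<s}"
proof (rule inj_onI)
  fix k l assume kl: "k \<in> {..<s}" "l \<in> {..<s}" "pr k = pr l"
  then have k: "k < s" and l: "l < s" by auto
  have "Min (pr k) = Min (pr l)" using kl(3) by simp
  then have "xs!k = xs!l" using pr_min[OF k] pr_min[OF l] by simp
  then show "k = l" using nth_inj k l by auto
qed

lemma card_B0: "card (B0 B) = s"
  unfolding B0_pr using card_image[OF pr_inj] by simp

lemma pr_par: "k < s \<Longrightarrow> even (xs!(2*s-1-k) - xs!k)"
proof -
  assume k: "k < s"
  have "even (Max (pr k) - Min (pr k))" using B0_iff[OF pn pr_B[OF k]] pr_B0[OF k] by simp
  then show ?thesis using pr_min[OF k] pr_max[OF k] by simp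
qed

lemma pr_sub: "k < s \<Longrightarrow> pr k \<subseteq> set xs"
  unfolding pr_def using len by auto

lemma setxs_pr: "y \<in> set xs \<Longrightarrow> \<exists>k<s. y \<in> pr k"
proof -
  assume "y \<in> set xs"
  then obtain i where i: "i < 2*s" "y = xs!i" using len by (metis in_set_conv_nth)
  show ?thesis
  proof (cases "i < s")
    case True then show ?thesis using i unfolding pr_def by auto
  next
    case False
    then have a: "2*s-1-i < s" and b: "2*s-1-(2*s-1-i) = i" using i by auto
    have "y \<in> pr (2*s-1-i)" unfolding pr_def b using i by simp
    then show ?thesis using a by blast
  qed
qed

lemma Union_B0: "\<Union>(B0 B) = set xs"
  unfolding B0_pr using pr_sub setxs_pr by blast

lemma setxs_notB1': "y \<in> set xs \<Longrightarrow> y \<notin> \<Union>(B1 B)"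
proof
  assume y: "y \<in> set xs" and "y \<in> \<Union>(B1 B)"
  then obtain Y where Y: "Y \<in> B1 B" "y \<in> Y" by blast
  obtain k where k: "k < s" "y \<in> pr k" using setxs_pr y by blast
  have "pr k \<noteq> Y" using B01'[OF pn pr_B0[OF k(1)]] Y(1) by blast
  then have "pr k \<inter> Y = {}" using PN_disj[OF pn pr_B[OF k(1)]] Y(1) B1_sub by blast
  then show False using k(2) Y(2) by blast
qed

lemma setxs_notB1: "y \<in> set xs \<Longrightarrow> Y \<in> B1 B \<Longrightarrow> y \<notin> ival Y"
  using setxs_notB1' ival_sub[OF st] by blast

lemma UB_sub: "\<Union>B \<subseteq> {1..N}" using PN_sub[OF pn] by blast

lemma par: "k < s \<Longrightarrow> xs!k mod 2 = (xs!0 + k) mod 2"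
proof (induction k)
  case 0 then show ?case by simp
next
  case (Suc k)
  then have ks: "k + 1 < 2*s" "k \<noteq> s - 1" by auto
  have "even (card {xs ! k + 1 .. xs ! (k+1) - 1})" using cov0_even[OF pn gaps[OF ks]] .
  moreover have "xs!k < xs!(k+1)" using nth_less ks by auto
  ultimately have a: "xs!(k+1) mod 2 \<noteq> xs!k mod 2" by (rule parity_step)
  have ih: "xs!k mod 2 = (xs!0 + k) mod 2" using Suc.IH Suc.prems by simp
  have "xs!(k+1) mod 2 = (xs!0 + (k+1)) mod 2" using parity_step2[OF a ih] .
  then show ?case by simp
qed

lemma w_xs: "k < s \<Longrightarrow> w (xs!k) = w (xs!0) * (-1)^k"
proof -
  assume k: "k < s"
  have "odd (xs!k) \<longleftrightarrow> odd (xs!0 + k)" using par[OF k] by presburger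
  then show ?thesis unfolding w_def by (cases "even k") auto
qed

lemma w_pr: "k < s \<Longrightarrow> w (xs!(2*s-1-k)) = w (xs!k)"
proof -
  assume k: "k < s"
  have "even (xs!(2*s-1-k) - xs!k)" using pr_par k .
  moreover have "xs!k < xs!(2*s-1-k)" using pr_lt k .
  ultimately have "odd (xs!(2*s-1-k)) \<longleftrightarrow> odd (xs!k)" by presburger
  then show ?thesis unfolding w_def by auto
qed


lemma dbr_sub: "X \<in> B \<Longrightarrow> dbr N X \<subseteq> {1..N}"
proof -
  assume XB: "X \<in> B"
  obtain a b where pe: "X = {a,b}" "a < b" "Min X = a" "Max X = b" by (rule pairE[OF pn XB])
  have ab: "1 \<le> a" "b \<le> N" using PN_sub[OF pn XB] pe by auto
  show ?thesis
  proof (cases "X \<in> B1 B")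
    case True then show ?thesis using dbr_B1[OF pn True] pe ab by auto
  next
    case False
    then have "X \<in> B0 B" using B01[OF pn XB] by blast
    then show ?thesis using dbr_B0[OF pn] pe ab by auto
  qed
qed

lemma notB1_dbr: "y \<notin> \<Union>B \<Longrightarrow> X \<in> B1 B \<Longrightarrow> y \<notin> dbr N X"
proof -
  assume y: "y \<notin> \<Union>B" and X: "X \<in> B1 B"
  have "ival X \<subseteq> \<Union>B" using ival_sub[OF st X] B1_sub by blast
  then show ?thesis using y dbr_B1[OF pn X] unfolding ival_def by blast
qed

lemma B0_elem: "X \<in> B0 B \<Longrightarrow> \<exists>l<s. X = pr l"
  unfolding B0_pr by blast

lemma M1:
  assumes X: "X \<in> B1 B" and X': "X' \<in> B"
  shows "Min X \<in> dbr N X' \<longleftrightarrow> Max X \<in> dbr N X'"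
proof -
  have XB: "X \<in> B" using X B1_sub by blast
  obtain a b where pe: "X = {a,b}" "a < b" "Min X = a" "Max X = b" by (rule pairE[OF pn XB])
  have ab: "1 \<le> a" "b \<le> N" using PN_sub[OF pn XB] pe by auto
  show ?thesis
  proof (cases "X' = X")
    case True then show ?thesis using dbr_B1[OF pn X] pe by auto
  next
    case False
    obtain c d where pe': "X' = {c,d}" "c < d" "Min X' = c" "Max X' = d" by (rule pairE[OF pn X'])
    have dis: "X \<inter> X' = {}" using PN_disj[OF pn XB X'] False by blast
    then have ne: "a \<noteq> c" "a \<noteq> d" "b \<noteq> c" "b \<noteq> d" using pe pe' by auto
    show ?thesis
    proof (cases "X' \<in> B1 B")
      case True
      have dX': "dbr N X' = {c..d}" using dbr_B1[OF pn True] pe' by simp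
      have n1: "\<not> (a < c \<and> c < b \<and> b < d)"
        using nocross[OF st X True] pe pe' by auto
      have n2: "\<not> (c < a \<and> a < d \<and> d < b)"
        using nocross[OF st True X] pe pe' by auto
      show ?thesis unfolding dX' pe(3,4) using n1 n2 ne pe(2) by auto
    next
      case False
      then have X0: "X' \<in> B0 B" using B01[OF pn X'] by blast
      have dX': "dbr N X' = {d..N} \<union> {1..c}" using dbr_B0[OF pn X0] pe' by simp
      have "c \<in> set xs" "d \<in> set xs" using Union_B0 X0 pe' by blast+
      then have "c \<notin> ival X" "d \<notin> ival X" using setxs_notB1 X by blast+
      then have "\<not> (a \<le> c \<and> c \<le> b)" "\<not> (a \<le> d \<and> d \<le> b)" using pe unfolding ival_def by auto
      then show ?thesis unfolding dX' pe(3,4) using ab pe(2) by auto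
    qed
  qed
qed

lemma M2:
  assumes k: "k < s"
  shows "{X'\<in>B. xs!k \<in> dbr N X'} = pr ` {k..<s}"
proof
  show "{X'\<in>B. xs!k \<in> dbr N X'} \<subseteq> pr ` {k..<s}"
  proof
    fix X' assume "X' \<in> {X'\<in>B. xs!k \<in> dbr N X'}"
    then have X': "X' \<in> B" "xs!k \<in> dbr N X'" by auto
    have xk: "xs!k \<in> set xs" using k len by simp
    have "X' \<notin> B1 B"
    proof
      assume X1: "X' \<in> B1 B"
      then have "xs!k \<notin> ival X'" using setxs_notB1[OF xk] by blast
      then show False using X'(2) dbr_B1[OF pn X1] unfolding ival_def by blast
    qed
    then have X0: "X' \<in> B0 B" using B01[OF pn X'(1)] by blast
    then obtain l where l: "l < s" "X' = pr l" using B0_elem by blast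
    have "xs!k \<in> {xs!(2*s-1-l)..N} \<union> {1..xs!l}"
      using X'(2) dbr_B0[OF pn X0] pr_min[OF l(1)] pr_max[OF l(1)] l(2) by simp
    moreover have "xs!k < xs!(2*s-1-l)" using nth_less k l by auto
    ultimately have "xs!k \<le> xs!l" by auto
    then have "k \<le> l" using nth_le_iff k l(1) by auto
    then show "X' \<in> pr ` {k..<s}" using l by auto
  qed
  show "pr ` {k..<s} \<subseteq> {X'\<in>B. xs!k \<in> dbr N X'}"
  proof
    fix X' assume "X' \<in> pr ` {k..<s}"
    then obtain l where l: "k \<le> l" "l < s" "X' = pr l" by auto
    have "xs!k \<le> xs!l" using nth_le_iff k l by auto
    moreover have "1 \<le> xs!k" using nth_range k by auto
    ultimately have "xs!k \<in> dbr N (pr l)"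
      using dbr_B0[OF pn pr_B0[OF l(2)]] pr_min[OF l(2)] by simp
    then show "X' \<in> {X'\<in>B. xs!k \<in> dbr N X'}" using l pr_B by auto
  qed
qed

lemma M2':
  assumes k: "k < s"
  shows "{X'\<in>B. xs!(2*s-1-k) \<in> dbr N X'} = pr ` {k..<s}"
proof
  have kk: "2*s-1-k < 2*s" using k by auto
  show "{X'\<in>B. xs!(2*s-1-k) \<in> dbr N X'} \<subseteq> pr ` {k..<s}"
  proof
    fix X' assume "X' \<in> {X'\<in>B. xs!(2*s-1-k) \<in> dbr N X'}"
    then have X': "X' \<in> B" "xs!(2*s-1-k) \<in> dbr N X'" by auto
    have xk: "xs!(2*s-1-k) \<in> set xs" using kk len by simp
    have "X' \<notin> B1 B"
    proof
      assume X1: "X' \<in> B1 B"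
      then have "xs!(2*s-1-k) \<notin> ival X'" using setxs_notB1[OF xk] by blast
      then show False using X'(2) dbr_B1[OF pn X1] unfolding ival_def by blast
    qed
    then have X0: "X' \<in> B0 B" using B01[OF pn X'(1)] by blast
    then obtain l where l: "l < s" "X' = pr l" using B0_elem by blast
    have "xs!(2*s-1-k) \<in> {xs!(2*s-1-l)..N} \<union> {1..xs!l}"
      using X'(2) dbr_B0[OF pn X0] pr_min[OF l(1)] pr_max[OF l(1)] l(2) by simp
    moreover have "xs!l < xs!(2*s-1-k)" using nth_less k l by auto
    ultimately have "xs!(2*s-1-l) \<le> xs!(2*s-1-k)" by auto
    then have "2*s-1-l \<le> 2*s-1-k" using nth_le_iff kk l(1) by auto
    then have "k \<le> l" using k l(1) by auto
    then show "X' \<in> pr ` {k..<s}" using l by auto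
  qed
  show "pr ` {k..<s} \<subseteq> {X'\<in>B. xs!(2*s-1-k) \<in> dbr N X'}"
  proof
    fix X' assume "X' \<in> pr ` {k..<s}"
    then obtain l where l: "k \<le> l" "l < s" "X' = pr l" by auto
    have "2*s-1-l \<le> 2*s-1-k" using l by auto
    then have "xs!(2*s-1-l) \<le> xs!(2*s-1-k)" using nth_le_iff kk l by auto
    moreover have "xs!(2*s-1-k) \<le> N" using nth_range kk by auto
    ultimately have "xs!(2*s-1-k) \<in> dbr N (pr l)"
      using dbr_B0[OF pn pr_B0[OF l(2)]] pr_max[OF l(2)] by simp
    then show "X' \<in> {X'\<in>B. xs!(2*s-1-k) \<in> dbr N X'}" using l pr_B by auto
  qed
qed

lemma card_pr_range: "k < s \<Longrightarrow> card (pr ` {k..<s}) = s - k"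
proof -
  have "inj_on pr {k..<s}" using pr_inj by (rule inj_on_subset) auto
  then show "card (pr ` {k..<s}) = s - k" by (simp add: card_image)
qed

lemma rest_B0only:
  assumes y: "y \<notin> \<Union>B"
  shows "{X'\<in>B. y \<in> dbr N X'} = {X'\<in>B0 B. y \<in> dbr N X'}"
  using notB1_dbr[OF y] B01[OF pn] B0_sub by blast

lemma rest_mid:
  assumes y: "y \<notin> \<Union>B" and s1: "1 \<le> s" and lo: "xs!(s-1) < y" and hi: "y < xs!s"
  shows "{X'\<in>B. y \<in> dbr N X'} = {}"
proof -
  have "y \<notin> dbr N X'" if X0: "X' \<in> B0 B" for X'
  proof -
    obtain l where l: "l < s" "X' = pr l" using B0_elem X0 by blast
    have "xs!l \<le> xs!(s-1)" using nth_le_iff l s1 by auto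
    moreover have "xs!s \<le> xs!(2*s-1-l)" using nth_le_iff l s1 by auto
    ultimately show ?thesis using dbr_B0[OF pn X0] pr_min[OF l(1)] pr_max[OF l(1)] l(2) lo hi by auto
  qed
  then show ?thesis using rest_B0only[OF y] by blast
qed

lemma rest_out:
  assumes y: "y \<notin> \<Union>B" and s1: "1 \<le> s" and yN: "1 \<le> y" "y \<le> N"
    and out: "xs!(2*s-1) < y \<or> y < xs!0"
  shows "{X'\<in>B. y \<in> dbr N X'} = B0 B"
proof -
  have "y \<in> dbr N X'" if X0: "X' \<in> B0 B" for X'
  proof -
    obtain l where l: "l < s" "X' = pr l" using B0_elem X0 by blast
    have "xs!0 \<le> xs!l" using nth_le_iff l s1 by auto
    moreover have "xs!(2*s-1-l) \<le> xs!(2*s-1)" using nth_le_iff l s1 by auto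
    ultimately show ?thesis using dbr_B0[OF pn X0] pr_min[OF l(1)] pr_max[OF l(1)] l(2) out yN by auto
  qed
  then show ?thesis using rest_B0only[OF y] by blast
qed

lemma rest_s0:
  assumes y: "y \<notin> \<Union>B" and s0: "s = 0"
  shows "{X'\<in>B. y \<in> dbr N X'} = {}"
proof -
  have "B0 B = {}" using B0_pr s0 by simp
  then show ?thesis using rest_B0only[OF y] by blast
qed

lemma loc:
  assumes s1: "1 \<le> s" and y: "y \<notin> set xs" and lo: "xs!0 < y" and hi: "y < xs!(2*s-1)"
  shows "\<exists>k. k + 1 < 2*s \<and> xs!k < y \<and> y < xs!(k+1)"
proof -
  define j where "j = (LEAST j. y < xs!j)"
  have jex: "y < xs!j" unfolding j_def using hi by (rule LeastI)
  have jle: "j \<le> 2*s-1" unfolding j_def using hi by (rule Least_le)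
  have j0: "j \<noteq> 0"
  proof
    assume "j = 0" then show False using jex lo by simp
  qed
  have "\<not> y < xs!(j-1)" unfolding j_def
    by (rule not_less_Least) (use j0 j_def in auto)
  moreover have "xs!(j-1) \<noteq> y"
  proof -
    have "j - 1 < length xs" using jle s1 len by auto
    then have "xs!(j-1) \<in> set xs" by (rule nth_mem)
    then show ?thesis using y by auto
  qed
  ultimately have a: "xs!(j-1) < y" by auto
  have b: "j - 1 + 1 < 2*s" using jle j0 s1 by auto
  have c: "xs!(j - 1 + 1) = xs!j" using j0 by auto
  show ?thesis
    by (rule exI[of _ "j-1"]) (use a b c jex in simp)
qed

lemma mid:
  assumes s1: "1 \<le> s" and yN: "y \<in> {1..N}" and y: "y \<notin> \<Union>B"
    and lo: "xs!0 < y" and hi: "y < xs!(2*s-1)"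
  shows "xs!(s-1) < y \<and> y < xs!s"
proof -
  have ny: "y \<notin> set xs" using y Union_B0 B0_sub by blast
  obtain k where k: "k + 1 < 2*s" "xs!k < y" "y < xs!(k+1)" using loc[OF s1 ny lo hi] by blast
  have "k = s - 1"
  proof (rule ccontr)
    assume "k \<noteq> s - 1"
    then have "cov0 B {xs ! k + 1 .. xs ! (k+1) - 1}" using gaps k(1) by blast
    then have "{xs ! k + 1 .. xs ! (k+1) - 1} \<subseteq> \<Union>B" using cov0_sub[OF st] B1_sub by blast
    moreover have "y \<in> {xs ! k + 1 .. xs ! (k+1) - 1}" using k by auto
    ultimately show False using y by blast
  qed
  then show ?thesis using k s1 by auto
qed


lemma finUB: "finite (\<Union>B)"
proof -
  have "\<forall>X\<in>B. finite X" using PN_sub[OF pn] finite_subset by (metis finite_atLeastAtMost)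
  then show ?thesis using PN_fin[OF pn] by blast
qed

lemma dd_general:
  assumes KN: "K \<subseteq> {1..N}"
    and hK1: "\<And>X. X \<in> B1 B \<Longrightarrow> (Min X \<in> K \<longleftrightarrow> Max X \<in> K)"
    and hK0: "\<And>y. y \<in> set xs \<Longrightarrow> y \<notin> K"
    and hrest: "\<And>y. y \<in> {1..N} \<Longrightarrow> y \<notin> \<Union>B \<Longrightarrow> odd (card {X\<in>B. y \<in> dbr N X}) = (y \<in> K)"
  shows "dd {y. odd (card {X\<in>B. y \<in> dbr N X}) \<noteq> (y \<in> K)}
       = 2 * (\<Sum>k<s. if odd (s-k) then w (xs!k) else 0)"
proof -
  define m where "m y \<longleftrightarrow> (odd (card {X\<in>B. y \<in> dbr N X}) \<noteq> (y \<in> K))" for y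
  define f where "f y = (if m y then w y else 0)" for y
  have Eeq: "{y. odd (card {X\<in>B. y \<in> dbr N X}) \<noteq> (y \<in> K)} = {y. m y}" by (simp add: m_def)
  have msub: "y \<in> {1..N}" if my: "m y" for y
  proof (rule ccontr)
    assume yn: "y \<notin> {1..N}"
    have e: "{X\<in>B. y \<in> dbr N X} = {}" using dbr_sub yn by blast
    have "y \<notin> K" using KN yn by blast
    then show False using my e unfolding m_def by simp
  qed
  have E2: "{y. m y} = {1..N} \<inter> {y. m y}" using msub by blast
  have "dd {y. m y} = (\<Sum>y\<in>{1..N}. f y)"
    unfolding dd_def f_def by (subst E2, subst sum.inter_restrict) auto
  also have "\<dots> = (\<Sum>y\<in>{1..N} - \<Union>B. f y) + (\<Sum>y\<in>\<Union>B. f y)"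
    by (rule sum.subset_diff[OF UB_sub]) simp
  also have "(\<Sum>y\<in>{1..N} - \<Union>B. f y) = 0"
  proof (rule sum.neutral, rule ballI)
    fix y assume "y \<in> {1..N} - \<Union>B"
    then have "\<not> m y" using hrest unfolding m_def by blast
    then show "f y = 0" unfolding f_def by simp
  qed
  also have "(\<Sum>y\<in>\<Union>B. f y) = (\<Sum>X\<in>B. sum f X)"
  proof -
    have "\<forall>X\<in>B. finite X" using PN_sub[OF pn] finite_subset by (metis finite_atLeastAtMost)
    moreover have "\<forall>X\<in>B. \<forall>Y\<in>B. X \<noteq> Y \<longrightarrow> X \<inter> Y = {}" using PN_disj[OF pn] by blast
    ultimately show ?thesis using sum.Union_disjoint[of B f] by simp
  qed
  also have "(\<Sum>X\<in>B. sum f X) = (\<Sum>X\<in>B0 B. sum f X) + (\<Sum>X\<in>B1 B. sum f X)"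
  proof -
    have "B = B0 B \<union> B1 B" using B01[OF pn] B0_sub B1_sub by blast
    moreover have "B0 B \<inter> B1 B = {}" using B01'[OF pn] by blast
    moreover have "finite (B0 B)" "finite (B1 B)"
      using rev_finite_subset[OF PN_fin[OF pn]] B0_sub B1_sub by blast+
    ultimately show ?thesis using sum.union_disjoint by metis
  qed
  also have "(\<Sum>X\<in>B1 B. sum f X) = 0"
  proof (rule sum.neutral, rule ballI)
    fix X assume X: "X \<in> B1 B"
    have XB: "X \<in> B" using X B1_sub by blast
    obtain a b where pe: "X = {a,b}" "a < b" "Min X = a" "Max X = b" by (rule pairE[OF pn XB])
    have "{X'\<in>B. a \<in> dbr N X'} = {X'\<in>B. b \<in> dbr N X'}"
      using M1[OF X] pe by auto
    moreover have "a \<in> K \<longleftrightarrow> b \<in> K" using hK1[OF X] pe by simp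
    ultimately have mab: "m a = m b" unfolding m_def by simp
    have "odd (b - a)" using B1_iff[OF pn XB] X pe by simp
    then have "w a = - w b" unfolding w_def using pe(2) by presburger
    then show "sum f X = 0" unfolding pe(1) f_def using pe(2) mab by simp
  qed
  also have "(\<Sum>X\<in>B0 B. sum f X) = (\<Sum>k<s. sum f (pr k))"
    unfolding B0_pr by (subst sum.reindex[OF pr_inj]) simp
  also have "\<dots> = (\<Sum>k<s. 2 * (if odd (s-k) then w (xs!k) else 0))"
  proof (rule sum.cong[OF refl])
    fix k assume "k \<in> {..<s}"
    then have k: "k < s" by simp
    have ne: "xs!(2*s-1-k) \<noteq> xs!k" using pr_lt[OF k] by simp
    have c1: "card {X'\<in>B. xs!k \<in> dbr N X'} = s - k" using M2[OF k] card_pr_range[OF k] by simp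
    have c2: "card {X'\<in>B. xs!(2*s-1-k) \<in> dbr N X'} = s - k" using M2'[OF k] card_pr_range[OF k] by simp
    have n1: "xs!k \<notin> K" using hK0 k len by simp
    have n2: "xs!(2*s-1-k) \<notin> K" using hK0 k len by simp
    have m1: "m (xs!k) \<longleftrightarrow> odd (s-k)" using c1 n1 unfolding m_def by simp
    have m2: "m (xs!(2*s-1-k)) \<longleftrightarrow> odd (s-k)" using c2 n2 unfolding m_def by simp
    have "sum f (pr k) = f (xs!(2*s-1-k)) + f (xs!k)" unfolding pr_def using ne by simp
    also have "\<dots> = 2 * (if odd (s-k) then w (xs!k) else 0)"
      unfolding f_def using m1 m2 w_pr[OF k] by simp
    finally show "sum f (pr k) = 2 * (if odd (s-k) then w (xs!k) else 0)" .
  qed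
  finally show ?thesis unfolding Eeq by (simp add: sum_distrib_left)
qed


lemma cover_in:
  assumes cv: "cov0 B I" and Y: "Y \<in> B1 B" and z: "z \<in> Y" "z \<in> I" and y: "y \<in> Y" "y \<notin> I"
  shows "\<exists>p\<in>B1 B. Min p < z \<and> z < Max p \<and> ival p \<subseteq> I"
proof -
  obtain Cc where Cc: "Cc \<subseteq> B1 B" "I = \<Union>(ival ` Cc)"
    "\<forall>p\<in>Cc. \<forall>q\<in>Cc. p \<noteq> q \<longrightarrow> ival p \<inter> ival q = {}" using cv by (rule cov0E)
  have "z \<in> \<Union>(ival ` Cc)" using z(2) unfolding Cc(2) .
  then obtain p where p: "p \<in> Cc" "z \<in> ival p" by blast
  have pB1: "p \<in> B1 B" using p Cc(1) by blast
  have sub: "ival p \<subseteq> I" using p(1) Cc(2) by blast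
  have YB: "Y \<in> B" using Y B1_sub by blast
  obtain a b where pe: "Y = {a,b}" "a < b" "Min Y = a" "Max Y = b" by (rule pairE[OF pn YB])
  have "y \<in> ival Y" using y pe unfolding ival_def by auto
  then have "p \<noteq> Y" using sub y(2) by blast
  then have "p \<inter> Y = {}" using PN_disj[OF pn] pB1 YB B1_sub by blast
  then have "z \<notin> p" using z by blast
  moreover obtain c d where pe': "p = {c,d}" "c < d" "Min p = c" "Max p = d"
    by (rule pairE[OF pn subsetD[OF B1_sub pB1]])
  ultimately have "Min p < z" "z < Max p" using p(2) unfolding ival_def by auto
  then show ?thesis using pB1 sub by blast
qed

lemma last_ge: "i < 2*s \<Longrightarrow> xs!i \<le> xs!(2*s-1)"
  using nth_le_iff by auto
lemma hd_le: "i < 2*s \<Longrightarrow> xs!0 \<le> xs!i"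
  using nth_le_iff by auto

lemma setxs_bounds: "y \<in> set xs \<Longrightarrow> xs!0 \<le> y \<and> y \<le> xs!(2*s-1)"
proof -
  assume "y \<in> set xs"
  then obtain i where i: "i < 2*s" "y = xs!i" using len by (metis in_set_conv_nth)
  then show ?thesis using last_ge hd_le by auto
qed

lemma u_notin_II:
  assumes s1: "1 \<le> s" and NB: "N \<notin> \<Union>B" and u: "u \<in> {xs!(2*s-1)+1..N-1}"
    and c1: "cov0 B {xs!(2*s-1)+1..u-1}" and c2: "cov0 B {u+1..N-1}"
  shows "u \<notin> \<Union>B"
proof
  assume "u \<in> \<Union>B"
  then obtain Y where Y: "Y \<in> B" "u \<in> Y" by blast
  define L where "L = xs!(2*s-1)"
  have Lset: "L \<in> set xs" unfolding L_def using s1 len by simp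
  show False
  proof (cases "Y \<in> B1 B")
    case False
    then have "Y \<in> B0 B" using B01[OF pn Y(1)] by blast
    then have "u \<in> set xs" using Union_B0 Y(2) by blast
    then have "xs!0 \<le> u \<and> u \<le> xs!(2*s-1)" by (rule setxs_bounds)
    then show False using u by auto
  next
    case True
    obtain a b where pe: "Y = {a,b}" "a < b" "Min Y = a" "Max Y = b" by (rule pairE[OF pn Y(1)])
    have bN: "b \<le> N" using PN_sub[OF pn Y(1)] pe by auto
    have "u = a \<or> u = b" using Y(2) pe by auto
    then show False
    proof
      assume ua: "u = a"
      have "b \<noteq> N" using NB Y pe by blast
      then have bI: "b \<in> {u+1..N-1}" using ua pe bN by auto
      have "a \<notin> {u+1..N-1}" using ua by auto
      then obtain p where p: "p \<in> B1 B" "Min p < b" "b < Max p" "ival p \<subseteq> {u+1..N-1}"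
        using cover_in[OF c2 True _ bI] pe by blast
      have "Min p \<in> ival p" using p unfolding ival_def by auto
      then have "a < Min p" using p(4) ua by auto
      then show False using nocross[OF st True p(1)] p pe by auto
    next
      assume ub: "u = b"
      show False
      proof (cases "L + 1 \<le> a")
        case True
        then have aI: "a \<in> {L+1..u-1}" using ub pe by auto
        have "b \<notin> {L+1..u-1}" using ub by auto
        then obtain p where p: "p \<in> B1 B" "Min p < a" "a < Max p" "ival p \<subseteq> {L+1..u-1}"
          using cover_in[OF c1[folded L_def] \<open>Y \<in> B1 B\<close> _ aI] pe by blast
        have "Max p \<in> ival p" using p unfolding ival_def by auto
        then have "Max p \<le> u - 1" using p(4) by auto
        then have "Max p < b" using ub pe(2) by auto
        then show False using nocross[OF st p(1) \<open>Y \<in> B1 B\<close>] p pe by auto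
      next
        case False
        have "L \<notin> \<Union>(B1 B)" using setxs_notB1'[OF Lset] .
        then have "a \<noteq> L" using True pe by blast
        then have "a < L" using False by auto
        moreover have "L < b" using u ub unfolding L_def by auto
        ultimately have "L \<in> ival Y" using pe unfolding ival_def by auto
        then show False using setxs_notB1[OF Lset True] by blast
      qed
    qed
  qed
qed

lemma u_notin_I:
  assumes s1: "1 \<le> s" and u: "u \<in> {1..xs!0 - 1}"
    and c1: "cov0 B {1..u-1}" and c2: "cov0 B {u+1..xs!0 - 1}"
  shows "u \<notin> \<Union>B"
proof
  assume "u \<in> \<Union>B"
  then obtain Y where Y: "Y \<in> B" "u \<in> Y" by blast
  define H where "H = xs!0"
  have Hset: "H \<in> set xs" unfolding H_def using s1 len by simp
  show False
  proof (cases "Y \<in> B1 B")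
    case False
    then have "Y \<in> B0 B" using B01[OF pn Y(1)] by blast
    then have "u \<in> set xs" using Union_B0 Y(2) by blast
    then have "xs!0 \<le> u \<and> u \<le> xs!(2*s-1)" by (rule setxs_bounds)
    then show False using u by auto
  next
    case True
    obtain a b where pe: "Y = {a,b}" "a < b" "Min Y = a" "Max Y = b" by (rule pairE[OF pn Y(1)])
    have a1: "1 \<le> a" using PN_sub[OF pn Y(1)] pe by auto
    have "u = a \<or> u = b" using Y(2) pe by auto
    then show False
    proof
      assume ua: "u = a"
      show False
      proof (cases "b \<le> H - 1")
        case True
        then have bI: "b \<in> {u+1..H-1}" using ua pe by auto
        have "a \<notin> {u+1..H-1}" using ua by auto
        then obtain p where p: "p \<in> B1 B" "Min p < b" "b < Max p" "ival p \<subseteq> {u+1..H-1}"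
          using cover_in[OF c2[folded H_def] \<open>Y \<in> B1 B\<close> _ bI] pe by blast
        have "Min p \<in> ival p" using p unfolding ival_def by auto
        then have "a < Min p" using p(4) ua by auto
        then show False using nocross[OF st \<open>Y \<in> B1 B\<close> p(1)] p pe by auto
      next
        case False
        have "H \<notin> \<Union>(B1 B)" using setxs_notB1'[OF Hset] .
        then have "b \<noteq> H" using True pe by blast
        then have "H < b" using False by auto
        moreover have "a < H" using u ua unfolding H_def by auto
        ultimately have "H \<in> ival Y" using pe unfolding ival_def by auto
        then show False using setxs_notB1[OF Hset True] by blast
      qed
    next
      assume ub: "u = b"
      then have aI: "a \<in> {1..u-1}" using pe a1 by auto
      have "b \<notin> {1..u-1}" using ub by auto
      then obtain p where p: "p \<in> B1 B" "Min p < a" "a < Max p" "ival p \<subseteq> {1..u-1}"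
        using cover_in[OF c1 True _ aI] pe by blast
      have "Max p \<in> ival p" using p unfolding ival_def by auto
      then have "Max p \<le> u - 1" using p(4) by auto
      then have "Max p < b" using ub pe(2) by auto
      then show False using nocross[OF st p(1) True] p pe by auto
    qed
  qed
qed


abbreviation SS where "SS \<equiv> (\<Sum>k<s. if odd (s-k) then w (xs!k) else 0)"

lemma not_in_cov: "cov0 B I \<Longrightarrow> y \<notin> \<Union>B \<Longrightarrow> y \<notin> I"
  using cov0_sub[OF st] B1_sub by blast

lemma notset: "y \<notin> \<Union>B \<Longrightarrow> y \<notin> set xs"
  using Union_B0 B0_sub by blast

lemma eps_minus:
  assumes cond: "s = 0 \<or> (cov0 B {1..xs!0 - 1} \<and> cov0 B {xs!(2*s-1) + 1 .. N})"
  shows "dd (fsum (dbr N) B) = 2 * SS"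
proof -
  have e: "fsum (dbr N) B = {y. odd (card {X\<in>B. y \<in> dbr N X}) \<noteq> (y \<in> ({}::nat set))}"
    by (simp add: fsum_def)
  have hrest: "odd (card {X\<in>B. y \<in> dbr N X}) = (y \<in> ({}::nat set))"
    if y: "y \<in> {1..N}" "y \<notin> \<Union>B" for y
  proof -
    have "{X\<in>B. y \<in> dbr N X} = {}"
    proof (cases "s = 0")
      case True then show ?thesis using rest_s0 y(2) by blast
    next
      case False
      then have s1: "1 \<le> s" and cv: "cov0 B {1..xs!0 - 1}" "cov0 B {xs!(2*s-1) + 1 .. N}"
        using cond by auto
      have n1: "y \<notin> {1..xs!0 - 1}" using not_in_cov[OF cv(1) y(2)] .
      have n2: "y \<notin> {xs!(2*s-1) + 1 .. N}" using not_in_cov[OF cv(2) y(2)] .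
      have n3: "y \<notin> set xs" using notset[OF y(2)] .
      have "xs!0 \<in> set xs" "xs!(2*s-1) \<in> set xs" using s1 len by auto
      then have "y \<noteq> xs!0" "y \<noteq> xs!(2*s-1)" using n3 by auto
      moreover have "xs!0 \<le> y" using n1 y(1) by auto
      moreover have "y \<le> xs!(2*s-1)" using n2 y(1) by auto
      ultimately have "xs!0 < y" "y < xs!(2*s-1)" by auto
      then have "xs!(s-1) < y \<and> y < xs!s" using mid[OF s1 y(1) y(2)] by blast
      then show ?thesis using rest_mid[OF y(2) s1] by blast
    qed
    then have "card {X\<in>B. y \<in> dbr N X} = 0" by (metis card.empty)
    then show ?thesis by simp
  qed
  show ?thesis unfolding e by (rule dd_general) (use hrest in auto)
qed

lemma eps_II:
  assumes s1: "1 \<le> s" and so: "odd s" and NB: "N \<notin> \<Union>B"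
    and u: "u \<in> {xs!(2*s-1)+1..N-1}" and c1: "cov0 B {xs!(2*s-1)+1..u-1}"
    and c2: "cov0 B {u+1..N-1}" and c0: "cov0 B {1..xs!0 - 1}"
  shows "dd (sdiff (fsum (dbr N) B) {u..N}) = 2 * SS"
proof -
  define L where "L = xs!(2*s-1)"
  have Lset: "L \<in> set xs" unfolding L_def using s1 len by simp
  have L1: "1 \<le> L" "L \<le> N" using setxs Lset by auto
  have LN: "L \<noteq> N" using Lset NB Union_B0 B0_sub by blast
  have H0: "xs!0 \<in> set xs" using s1 len by simp
  have uB: "u \<notin> \<Union>B" by (rule u_notin_II[OF s1 NB u c1 c2])
  have uu: "L < u" "u < N" using u unfolding L_def by auto
  have e: "sdiff (fsum (dbr N) B) {u..N} = {y. odd (card {X\<in>B. y \<in> dbr N X}) \<noteq> (y \<in> {u..N})}"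
    by (auto simp: sdiff_def fsum_def)
  show ?thesis unfolding e
  proof (rule dd_general)
    show "{u..N} \<subseteq> {1..N}" using uu L1 by auto
  next
    fix X assume X: "X \<in> B1 B"
    have XB: "X \<in> B" using X B1_sub by blast
    obtain a b where pe: "X = {a,b}" "a < b" "Min X = a" "Max X = b" by (rule pairE[OF pn XB])
    have bN: "b \<le> N" using PN_sub[OF pn XB] pe by auto
    have "\<not> (a < u \<and> u \<le> b)"
    proof
      assume h: "a < u \<and> u \<le> b"
      have "u \<noteq> b" using uB XB pe by blast
      then have "u \<in> ival X" using h pe unfolding ival_def by auto
      then show False using ival_sub[OF st X] B1_sub uB by blast
    qed
    then show "Min X \<in> {u..N} \<longleftrightarrow> Max X \<in> {u..N}" using pe bN by auto
  next
    fix y assume "y \<in> set xs"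
    then have "xs!0 \<le> y \<and> y \<le> xs!(2*s-1)" by (rule setxs_bounds)
    then show "y \<notin> {u..N}" using uu unfolding L_def by auto
  next
    fix y assume y: "y \<in> {1..N}" "y \<notin> \<Union>B"
    show "odd (card {X\<in>B. y \<in> dbr N X}) = (y \<in> {u..N})"
    proof (cases "y = u \<or> y = N")
      case True
      have "L < y" using True uu L1 LN by auto
      then have "{X\<in>B. y \<in> dbr N X} = B0 B" using rest_out[OF y(2) s1] y(1) unfolding L_def by auto
      then have "card {X\<in>B. y \<in> dbr N X} = s" using card_B0 by simp
      moreover have "y \<in> {u..N}" using True uu by auto
      ultimately show ?thesis using so by simp
    next
      case False
      have n0: "y \<notin> {1..xs!0 - 1}" using not_in_cov[OF c0 y(2)] .
      have n1: "y \<notin> {L+1..u-1}" using not_in_cov[OF c1 y(2)] unfolding L_def .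
      have n2: "y \<notin> {u+1..N-1}" using not_in_cov[OF c2 y(2)] .
      have n3: "y \<notin> set xs" using notset[OF y(2)] .
      have "y \<noteq> xs!0" "y \<noteq> L" using n3 H0 Lset by auto
      moreover have "xs!0 \<le> y" using n0 y(1) by auto
      moreover have "y \<le> L" using n1 n2 y(1) False by auto
      ultimately have yy: "xs!0 < y" "y < xs!(2*s-1)" unfolding L_def by auto
      then have "xs!(s-1) < y \<and> y < xs!s" using mid[OF s1 y(1) y(2)] by blast
      then have "{X\<in>B. y \<in> dbr N X} = {}" using rest_mid[OF y(2) s1] by blast
      then have "card {X\<in>B. y \<in> dbr N X} = 0" by (metis card.empty)
      moreover have "y \<notin> {u..N}" using yy uu unfolding L_def by auto
      ultimately show ?thesis by simp
    qed
  qed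
qed

lemma eps_I:
  assumes s1: "1 \<le> s" and so: "odd s" and NB: "N \<notin> \<Union>B"
    and u: "u \<in> {1..xs!0 - 1}" and c1: "cov0 B {1..u-1}" and c2: "cov0 B {u+1..xs!0 - 1}"
    and c3: "cov0 B {xs!(2*s-1)+1..N-1}"
  shows "dd (sdiff (sdiff (fsum (dbr N) B) {N}) {1..u}) = 2 * SS"
proof -
  define L where "L = xs!(2*s-1)"
  define H where "H = xs!0"
  have Lset: "L \<in> set xs" unfolding L_def using s1 len by simp
  have Hset: "H \<in> set xs" unfolding H_def using s1 len by simp
  have L1: "1 \<le> L" "L \<le> N" using setxs Lset by auto
  have H1: "1 \<le> H" "H \<le> N" using setxs Hset by auto
  have LN: "L \<noteq> N" using Lset NB Union_B0 B0_sub by blast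
  have HL: "H \<le> L" using setxs_bounds[OF Lset] unfolding H_def L_def by auto
  have uB: "u \<notin> \<Union>B" by (rule u_notin_I[OF s1 u c1 c2])
  have uu: "1 \<le> u" "u < H" using u unfolding H_def by auto
  have uN: "u < N" using uu H1 by auto
  have e: "sdiff (sdiff (fsum (dbr N) B) {N}) {1..u}
      = {y. odd (card {X\<in>B. y \<in> dbr N X}) \<noteq> (y \<in> insert N {1..u})}"
    using uN by (auto simp: sdiff_def fsum_def)
  show ?thesis unfolding e
  proof (rule dd_general)
    show "insert N {1..u} \<subseteq> {1..N}" using uN by auto
  next
    fix X assume X: "X \<in> B1 B"
    have XB: "X \<in> B" using X B1_sub by blast
    obtain a b where pe: "X = {a,b}" "a < b" "Min X = a" "Max X = b" by (rule pairE[OF pn XB])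
    have a1: "1 \<le> a" using PN_sub[OF pn XB] pe by auto
    have nN: "a \<noteq> N" "b \<noteq> N" using NB XB pe by blast+
    have "\<not> (a \<le> u \<and> u < b)"
    proof
      assume h: "a \<le> u \<and> u < b"
      have "u \<noteq> a" using uB XB pe by blast
      then have "u \<in> ival X" using h pe unfolding ival_def by auto
      then show False using ival_sub[OF st X] B1_sub uB by blast
    qed
    then show "Min X \<in> insert N {1..u} \<longleftrightarrow> Max X \<in> insert N {1..u}" using pe nN a1 by auto
  next
    fix y assume ys: "y \<in> set xs"
    then have "xs!0 \<le> y" using setxs_bounds by blast
    moreover have "y \<noteq> N" using ys NB Union_B0 B0_sub by blast
    ultimately show "y \<notin> insert N {1..u}" using uu unfolding H_def by auto
  next
    fix y assume y: "y \<in> {1..N}" "y \<notin> \<Union>B"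
    show "odd (card {X\<in>B. y \<in> dbr N X}) = (y \<in> insert N {1..u})"
    proof (cases "y = u \<or> y = N")
      case True
      have "L < y \<or> y < H" using True uu L1 LN by auto
      then have "{X\<in>B. y \<in> dbr N X} = B0 B" using rest_out[OF y(2) s1] y(1)
        unfolding L_def H_def by auto
      then have "card {X\<in>B. y \<in> dbr N X} = s" using card_B0 by simp
      moreover have "y \<in> insert N {1..u}" using True uu by auto
      ultimately show ?thesis using so by simp
    next
      case False
      have n1: "y \<notin> {1..u-1}" using not_in_cov[OF c1 y(2)] .
      have n2: "y \<notin> {u+1..H-1}" using not_in_cov[OF c2 y(2)] unfolding H_def .
      have n3: "y \<notin> {L+1..N-1}" using not_in_cov[OF c3 y(2)] unfolding L_def .
      have n4: "y \<notin> set xs" using notset[OF y(2)] .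
      have "y \<noteq> H" "y \<noteq> L" using n4 Hset Lset by auto
      moreover have "H \<le> y" using n1 n2 y(1) False uu by auto
      moreover have "y \<le> L" using n3 y(1) False by auto
      ultimately have yy: "xs!0 < y" "y < xs!(2*s-1)" unfolding L_def H_def by auto
      then have "xs!(s-1) < y \<and> y < xs!s" using mid[OF s1 y(1) y(2)] by blast
      then have "{X\<in>B. y \<in> dbr N X} = {}" using rest_mid[OF y(2) s1] by blast
      then have "card {X\<in>B. y \<in> dbr N X} = 0" by (metis card.empty)
      moreover have "y \<notin> insert N {1..u}" using yy uu False unfolding H_def by auto
      ultimately show ?thesis by simp
    qed
  qed
qed


lemma dd_B1: "X \<in> B1 B \<Longrightarrow> dd X = 0"
proof -
  assume X: "X \<in> B1 B"
  have XB: "X \<in> B" using X B1_sub by blast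
  obtain a b where pe: "X = {a,b}" "a < b" "Min X = a" "Max X = b" by (rule pairE[OF pn XB])
  have "odd (b - a)" using B1_iff[OF pn XB] X pe by simp
  then have "w a = - w b" unfolding w_def using pe(2) by presburger
  then show ?thesis unfolding dd_def pe(1) using pe(2) by simp
qed

lemma dd_pr: "k < s \<Longrightarrow> dd (pr k) = 2 * w (xs!k)"
proof -
  assume k: "k < s"
  have ne: "xs!(2*s-1-k) \<noteq> xs!k" using pr_lt[OF k] by simp
  show ?thesis unfolding dd_def pr_def using ne w_pr[OF k] by simp
qed

lemma span_dd:
  assumes "E \<in> span2 B"
  shows "\<exists>K \<subseteq> {..<s}. dd E = 2 * (\<Sum>k\<in>K. w (xs!k))"
proof -
  have "\<exists>S. E = fsum id S \<and> S \<subseteq> B" using assms unfolding span2_def mem_Collect_eq by (elim exE conjE) blast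
  then obtain S where S: "S \<subseteq> B" "E = fsum id S" by blast
  have finS: "finite S" using finite_subset[OF S(1) PN_fin[OF pn]] .
  have disj: "\<forall>X\<in>S. \<forall>Y\<in>S. X \<noteq> Y \<longrightarrow> X \<inter> Y = {}" using PN_disj[OF pn] S(1) by blast
  have finX: "\<forall>X\<in>S. finite X"
  proof
    fix X assume "X \<in> S"
    then have "card X = 2" using PN_card[OF pn] S(1) by blast
    then show "finite X" by (intro card_ge_0_finite) simp
  qed
  have EU: "E = \<Union>S"
  proof (rule set_eqI)
    fix x
    show "x \<in> E \<longleftrightarrow> x \<in> \<Union>S"
    proof (cases "x \<in> \<Union>S")
      case True
      then obtain X where X: "X \<in> S" "x \<in> X" by blast
      have "{X'\<in>S. x \<in> X'} = {X}"
      proof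
        show "{X'\<in>S. x \<in> X'} \<subseteq> {X}"
        proof
          fix Y assume "Y \<in> {X'\<in>S. x \<in> X'}"
          then have Y: "Y \<in> S" "x \<in> Y" by auto
          show "Y \<in> {X}"
          proof (rule ccontr)
            assume "Y \<notin> {X}"
            then have "Y \<noteq> X" by simp
            then have "Y \<inter> X = {}" using disj Y(1) X(1) by blast
            then show False using Y(2) X(2) by blast
          qed
        qed
        show "{X} \<subseteq> {X'\<in>S. x \<in> X'}" using X by blast
      qed
      then have "card {X'\<in>S. x \<in> X'} = 1" by simp
      then show ?thesis unfolding S(2) fsum_def using True by simp
    next
      case False
      then have "{X'\<in>S. x \<in> X'} = {}" by blast
      then have "card {X'\<in>S. x \<in> X'} = 0" by (metis card.empty)
      then show ?thesis unfolding S(2) fsum_def using False by simp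
    qed
  qed
  have "dd E = (\<Sum>X\<in>S. dd X)"
  proof -
    have "sum w (\<Union>S) = (sum \<circ> sum) w S" by (rule sum.Union_disjoint[OF finX disj])
    then show ?thesis unfolding EU dd_def by simp
  qed
  also have "\<dots> = (\<Sum>X\<in>S \<inter> B0 B. dd X) + (\<Sum>X\<in>S \<inter> B1 B. dd X)"
  proof -
    have Seq: "S = (S \<inter> B0 B) \<union> (S \<inter> B1 B)" using B01[OF pn] S(1) by blast
    have dis: "(S \<inter> B0 B) \<inter> (S \<inter> B1 B) = {}" using B01'[OF pn] by blast
    have f1: "finite (S \<inter> B0 B)" and f2: "finite (S \<inter> B1 B)" using finS by auto
    have "sum dd S = sum dd ((S \<inter> B0 B) \<union> (S \<inter> B1 B))" using arg_cong[OF Seq, of "sum dd"] .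
    also have "\<dots> = sum dd (S \<inter> B0 B) + sum dd (S \<inter> B1 B)" by (rule sum.union_disjoint[OF f1 f2 dis])
    finally show ?thesis .
  qed
  also have "(\<Sum>X\<in>S \<inter> B1 B. dd X) = 0"
  proof (rule sum.neutral, rule ballI)
    fix X assume "X \<in> S \<inter> B1 B"
    then have "X \<in> B1 B" by blast
    then show "dd X = 0" by (rule dd_B1)
  qed
  finally have e1: "dd E = (\<Sum>X\<in>S \<inter> B0 B. dd X)" by simp
  define K where "K = {k. k < s \<and> pr k \<in> S}"
  have Ksub: "K \<subseteq> {..<s}" unfolding K_def by auto
  have SB0: "S \<inter> B0 B = pr ` K"
  proof
    show "S \<inter> B0 B \<subseteq> pr ` K"
    proof
      fix X assume X: "X \<in> S \<inter> B0 B"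
      then obtain l where l: "l < s" "X = pr l" using B0_elem by blast
      then have "l \<in> K" unfolding K_def using X by blast
      then show "X \<in> pr ` K" using l(2) by blast
    qed
    show "pr ` K \<subseteq> S \<inter> B0 B"
    proof
      fix X assume "X \<in> pr ` K"
      then obtain l where l: "l \<in> K" "X = pr l" by blast
      then have "l < s" "pr l \<in> S" unfolding K_def by auto
      then show "X \<in> S \<inter> B0 B" using l(2) pr_B0 by blast
    qed
  qed
  have injK: "inj_on pr K" using pr_inj Ksub by (rule inj_on_subset)
  have "(\<Sum>X\<in>S \<inter> B0 B. dd X) = (\<Sum>k\<in>K. dd (pr k))"
    unfolding SB0 by (subst sum.reindex[OF injK]) simp
  also have "\<dots> = (\<Sum>k\<in>K. 2 * w (xs!k))"
  proof (rule sum.cong[OF refl])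
    fix k assume "k \<in> K"
    then have "k < s" using Ksub by auto
    then show "dd (pr k) = 2 * w (xs!k)" by (rule dd_pr)
  qed
  also have "\<dots> = 2 * (\<Sum>k\<in>K. w (xs!k))" by (simp add: sum_distrib_left)
  finally have "dd E = 2 * (\<Sum>k\<in>K. w (xs!k))" using e1 by simp
  then show ?thesis using Ksub by (intro exI[of _ K]) simp
qed

lemma SS_eq: "SS = w (xs!0) * (\<Sum>k<s. if odd (s-k) then (-1::int)^k else 0)"
proof -
  have "SS = (\<Sum>k<s. w (xs!0) * (if odd (s-k) then (-1::int)^k else 0))"
  proof (rule sum.cong[OF refl])
    fix k assume "k \<in> {..<s}"
    then have ks: "k < s" by simp
    have e: "w (xs!k) = w (xs!0) * (-1)^k" by (rule w_xs[OF ks])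
    show "(if odd (s-k) then w (xs!k) else 0) = w (xs!0) * (if odd (s-k) then (-1::int)^k else 0)"
      unfolding e by simp
  qed
  then show ?thesis by (simp add: sum_distrib_left)
qed

lemma sumK_eq: "K \<subseteq> {..<s} \<Longrightarrow> (\<Sum>k\<in>K. w (xs!k)) = w (xs!0) * (\<Sum>k\<in>K. (-1::int)^k)"
proof -
  assume K: "K \<subseteq> {..<s}"
  have "(\<Sum>k\<in>K. w (xs!k)) = (\<Sum>k\<in>K. w (xs!0) * (-1::int)^k)"
  proof (rule sum.cong[OF refl])
    fix k assume "k \<in> K"
    then have "k < s" using K by auto
    then show "w (xs!k) = w (xs!0) * (-1)^k" by (rule w_xs)
  qed
  then show ?thesis by (simp add: sum_distrib_left)
qed

lemma w01: "w (xs!0) = 1 \<or> w (xs!0) = -1" unfolding w_def by auto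


lemma uniqI:
  assumes s1: "1 \<le> s"
    and u: "u \<in> {1..xs!0 - 1}" "cov0 B {1..u-1}" "cov0 B {u+1..xs!0 - 1}"
    and v: "v \<in> {1..xs!0 - 1}" "cov0 B {1..v-1}" "cov0 B {v+1..xs!0 - 1}"
  shows "u = v"
proof (rule ccontr)
  assume ne: "u \<noteq> v"
  have nu: "u \<notin> \<Union>B" by (rule u_notin_I[OF s1 u])
  have nv: "v \<notin> \<Union>B" by (rule u_notin_I[OF s1 v])
  show False
  proof (cases "u < v")
    case True
    then have "v \<in> {u+1..xs!0 - 1}" using v(1) by auto
    then show False using not_in_cov[OF u(3) nv] by blast
  next
    case False
    then have "u \<in> {v+1..xs!0 - 1}" using u(1) ne by auto
    then show False using not_in_cov[OF v(3) nu] by blast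
  qed
qed

lemma uniqII:
  assumes s1: "1 \<le> s" and NB: "N \<notin> \<Union>B"
    and u: "u \<in> {xs!(2*s-1)+1..N-1}" "cov0 B {xs!(2*s-1)+1..u-1}" "cov0 B {u+1..N-1}"
    and v: "v \<in> {xs!(2*s-1)+1..N-1}" "cov0 B {xs!(2*s-1)+1..v-1}" "cov0 B {v+1..N-1}"
  shows "u = v"
proof (rule ccontr)
  assume ne: "u \<noteq> v"
  have nu: "u \<notin> \<Union>B" by (rule u_notin_II[OF s1 NB u])
  have nv: "v \<notin> \<Union>B" by (rule u_notin_II[OF s1 NB v])
  show False
  proof (cases "u < v")
    case True
    then have "v \<in> {u+1..N-1}" using v(1) by auto
    then show False using not_in_cov[OF u(3) nv] by blast
  next
    case False
    then have "u \<in> {v+1..N-1}" using u(1) ne by auto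
    then show False using not_in_cov[OF v(3) nu] by blast
  qed
qed

lemma hd_last: "1 \<le> s \<Longrightarrow> hd xs = xs!0 \<and> last xs = xs!(2*s-1)"
proof -
  assume s1: "1 \<le> s"
  then have ne: "xs \<noteq> []" using len by auto
  have "hd xs = xs!0" using ne by (simp add: hd_conv_nth)
  moreover have "last xs = xs!(2*s-1)" using ne len by (simp add: last_conv_nth)
  ultimately show ?thesis by simp
qed

end

lemma istar_eq:
  assumes st: "starP N B" and sq: "seq_ok N B xs"
  shows "istar N B = xs"
proof -
  have sb: "SB N B xs (length xs div 2)" using st sq by (simp add: SB_def)
  interpret S: SB N B xs "length xs div 2" by (rule sb)
  have H: "ys = xs" if ys: "seq_ok N B ys" for ys
  proof -
    have sb2: "SB N B ys (length ys div 2)" using st ys by (simp add: SB_def)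
    interpret T: SB N B ys "length ys div 2" by (rule sb2)
    have "set ys = set xs" using S.Union_B0 T.Union_B0 by simp
    then show ?thesis using strict_sorted_equal[OF S.srt T.srt] by simp
  qed
  show ?thesis unfolding istar_def by (rule the_equality[where P="seq_ok N B", OF sq H])
qed

lemma arith_main:
  fixes a v :: int and s :: nat
  assumes a: "a = 1 \<or> a = -1" and c: "s = 0 \<or> a = 1 \<or> odd s"
    and v: "- int (s div 2) \<le> v" "v \<le> int ((s+1) div 2)"
  shows "\<bar>1 - 2 * (2 * (a * v))\<bar>
    \<le> \<bar>1 - 2 * (2 * (a * (if odd s then int ((s+1) div 2) else - int (s div 2))))\<bar>"
proof (cases "odd s")
  case True
  then obtain m where m: "s = 2*m+1" by (rule oddE)
  have d: "s div 2 = m" "(s+1) div 2 = m+1" using m by simp_all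
  show ?thesis using a v True unfolding d by auto
next
  case False
  then have "even s" by simp
  then obtain m where m: "s = 2*m" by (rule evenE)
  have d: "s div 2 = m" "(s+1) div 2 = m" using m by simp_all
  have a1: "a = 1 \<or> m = 0" using c False m by auto
  show ?thesis using a1 a v False unfolding d by auto
qed

lemma XplusXminus: "B \<in> Xplus N \<Longrightarrow> B \<notin> Xminus N"
proof
  assume p: "B \<in> Xplus N" and m: "B \<in> Xminus N"
  have "N \<notin> \<Union>B" using p unfolding Xplus_def condII_def supp_def by auto
  moreover have "\<exists>i. {i, N} \<in> B" using m unfolding Xminus_def condIII_def Let_def by (cases "even (card (B0 B))") auto
  ultimately show False by blast
qed


lemma even_u:
  fixes N u :: nat
  assumes N: "odd N" and c: "even (card {u+1..N-1})" and u: "u \<le> N - 1"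
  shows "even u"
proof -
  obtain m where m: "N = 2*m+1" using N by (rule oddE)
  have "card {u+1..N-1} = 2*m - u" using m by simp
  then have "even (2*m - u)" using c by simp
  moreover have "u \<le> 2*m" using u m by simp
  ultimately show ?thesis by presburger
qed

lemma XX_main:
  assumes N: "odd N" and C: "C \<in> XX N"
  obtains xs s where "SB N C xs s" "istar N C = xs" "card (B0 C) = s"
    "dd (eps' N C) = 2 * (w (xs!0) * (if odd s then int ((s+1) div 2) else - int (s div 2)))"
    "s = 0 \<or> w (xs!0) = 1 \<or> odd s"
    "C \<in> Xplus N \<longrightarrow> 1 \<le> s \<longrightarrow> (odd (uB N C) \<and> w (xs!0) = -1 \<and> odd s)
        \<or> (even (uB N C) \<and> w (xs!0) = 1 \<and> odd s)"
proof -
  have st: "starP N C" using C unfolding XX_def Xplus_def Xminus_def by auto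
  obtain xs where sq: "seq_ok N C xs" using st unfolding starP_def by blast
  have ist: "istar N C = xs" by (rule istar_eq[OF st sq])
  define s where "s = length xs div 2"
  have sb: "SB N C xs s" using st sq s_def by (simp add: SB_def)
  interpret S: SB N C xs s by (rule sb)
  have cB0: "card (B0 C) = s" by (rule S.card_B0)
  define R where "R = 2 * (\<Sum>k<s. if odd (s-k) then w (xs!k) else 0)"
  have R_eq: "R = 2 * (w (xs!0) * (if odd s then int ((s+1) div 2) else - int (s div 2)))"
    unfolding R_def using S.SS_eq T_closed by simp
  have res: "dd (eps' N C) = R \<and> (s = 0 \<or> w (xs!0) = 1 \<or> odd s)
    \<and> (C \<in> Xplus N \<longrightarrow> 1 \<le> s \<longrightarrow> (odd (uB N C) \<and> w (xs!0) = -1 \<and> odd s)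
        \<or> (even (uB N C) \<and> w (xs!0) = 1 \<and> odd s))"
  proof (cases "C \<in> Xminus N")
    case True
    have e: "eps' N C = fsum (dbr N) C" using True unfolding eps'_def by simp
    have cI: "condI N C" using True unfolding Xminus_def condIII_def by blast
    have cond: "s = 0 \<or> (cov0 C {1..xs!0 - 1} \<and> cov0 C {xs!(2*s-1) + 1 .. N})"
    proof (cases "s = 0")
      case False
      then have s1: "1 \<le> s" by simp
      have "cov0 C {1..hd xs - 1} \<and> cov0 C {last xs + 1..N}"
        using cI False unfolding condI_def Let_def ist cB0 by simp
      then show ?thesis using S.hd_last[OF s1] by simp
    qed simp
    have dd: "dd (eps' N C) = R" unfolding e R_def by (rule S.eps_minus[OF cond])
    have ac: "s = 0 \<or> w (xs!0) = 1 \<or> odd s"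
    proof (cases "s = 0")
      case False
      then have cv: "cov0 C {1..xs!0 - 1}" using cond by simp
      have "even (card {1..xs!0 - 1})" by (rule cov0_even[OF S.pn cv])
      then have ev: "even (xs!0 - 1)" by simp
      have "1 \<le> xs!0" using S.nth_range False by auto
      then have "odd (xs!0)" using ev by presburger
      then show ?thesis unfolding w_def by simp
    qed simp
    have "C \<notin> Xplus N" using True XplusXminus by blast
    then show ?thesis using dd ac by simp
  next
    case False
    then have Cp: "C \<in> Xplus N" using C unfolding XX_def by blast
    have cII: "condII N C" using Cp unfolding Xplus_def by blast
    have NB: "N \<notin> \<Union>C" using cII unfolding condII_def supp_def by blast
    show ?thesis
    proof (cases "s = 0")
      case True
      have e: "eps' N C = fsum (dbr N) C" using Cp cB0 True unfolding eps'_def by simp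
      have dd: "dd (eps' N C) = R" unfolding e R_def by (rule S.eps_minus) (use True in simp)
      then show ?thesis using True by simp
    next
      case False
      then have s1: "1 \<le> s" by simp
      have hl: "hd xs = xs!0" "last xs = xs!(2*s-1)" using S.hd_last[OF s1] by auto
      have so: "odd s" and cases: "caseI N C \<or> caseII N C"
        using cII False unfolding condII_def Let_def cB0 by auto
      have cIe: "caseI N C \<longleftrightarrow> cov1 C {1..xs!0 - 1} \<and> cov0 C {xs!(2*s-1) + 1 .. N - 1}"
        unfolding caseI_def Let_def ist hl ..
      have cIIe: "caseII N C \<longleftrightarrow> cov0 C {1..xs!0 - 1} \<and> cov1 C {xs!(2*s-1) + 1 .. N - 1}"
        unfolding caseII_def Let_def ist hl ..
      have notboth: "\<not> (caseI N C \<and> caseII N C)"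
      proof
        assume h: "caseI N C \<and> caseII N C"
        have cv1: "cov1 C {1..xs!0 - 1}" using h cIe by simp
        have cv0: "cov0 C {1..xs!0 - 1}" using h cIIe by simp
        have "odd (card {1..xs!0 - 1})" by (rule cov1_odd[OF S.pn cv1]) simp
        moreover have "even (card {1..xs!0 - 1})" by (rule cov0_even[OF S.pn cv0])
        ultimately show False by simp
      qed
      define P where "P u \<longleftrightarrow> (caseI N C \<and> u \<in> {1..xs!0 - 1} \<and> cov0 C {1..u-1} \<and> cov0 C {u+1..xs!0 - 1})
        \<or> (caseII N C \<and> u \<in> {xs!(2*s-1)+1..N-1} \<and> cov0 C {xs!(2*s-1)+1..u-1} \<and> cov0 C {u+1..N-1})" for u
      have uBe: "uB N C = (THE u. P u)" unfolding uB_def Let_def ist hl P_def ..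
      have exP: "\<exists>u. P u"
      proof (cases "caseI N C")
        case True
        then have cv: "cov1 C {1..xs!0 - 1}" using cIe by simp
        obtain u where u: "1 \<le> u" "u \<le> xs!0 - 1" "cov0 C {1..u-1}" "cov0 C {u+1..xs!0 - 1}"
          by (rule cov1_split[OF S.pn cv]) simp
        then have "P u" unfolding P_def using True by simp
        then show ?thesis by blast
      next
        case False
        then have c2: "caseII N C" using cases by simp
        then have cv: "cov1 C {xs!(2*s-1) + 1 .. N - 1}" using cIIe by simp
        obtain u where u: "xs!(2*s-1) + 1 \<le> u" "u \<le> N - 1" "cov0 C {xs!(2*s-1) + 1..u-1}" "cov0 C {u+1..N - 1}"
          by (rule cov1_split[OF S.pn cv]) simp
        then have "P u" unfolding P_def using c2 by simp
        then show ?thesis by blast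
      qed
      have unP: "u = v" if "P u" "P v" for u v
      proof -
        have "(caseI N C \<and> u \<in> {1..xs!0 - 1} \<and> cov0 C {1..u-1} \<and> cov0 C {u+1..xs!0 - 1}
               \<and> v \<in> {1..xs!0 - 1} \<and> cov0 C {1..v-1} \<and> cov0 C {v+1..xs!0 - 1})
          \<or> (caseII N C \<and> u \<in> {xs!(2*s-1)+1..N-1} \<and> cov0 C {xs!(2*s-1)+1..u-1} \<and> cov0 C {u+1..N-1}
               \<and> v \<in> {xs!(2*s-1)+1..N-1} \<and> cov0 C {xs!(2*s-1)+1..v-1} \<and> cov0 C {v+1..N-1})"
          using that notboth unfolding P_def by blast
        then show ?thesis
        proof
          assume h: "caseI N C \<and> u \<in> {1..xs!0 - 1} \<and> cov0 C {1..u-1} \<and> cov0 C {u+1..xs!0 - 1}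
               \<and> v \<in> {1..xs!0 - 1} \<and> cov0 C {1..v-1} \<and> cov0 C {v+1..xs!0 - 1}"
          show ?thesis by (rule S.uniqI[OF s1]) (use h in blast)+
        next
          assume h: "caseII N C \<and> u \<in> {xs!(2*s-1)+1..N-1} \<and> cov0 C {xs!(2*s-1)+1..u-1} \<and> cov0 C {u+1..N-1}
               \<and> v \<in> {xs!(2*s-1)+1..N-1} \<and> cov0 C {xs!(2*s-1)+1..v-1} \<and> cov0 C {v+1..N-1}"
          show ?thesis by (rule S.uniqII[OF s1 NB]) (use h in blast)+
        qed
      qed
      have ex1: "\<exists>!u. P u" using exP unP by blast
      have PuB: "P (uB N C)" unfolding uBe using ex1 by (rule theI')
      define u where "u = uB N C"
      have Pu: "P u" using PuB unfolding u_def .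
      show ?thesis
      proof (cases "caseI N C")
        case True
        then have nII: "\<not> caseII N C" using notboth by blast
        have u1: "u \<in> {1..xs!0 - 1}" "cov0 C {1..u-1}" "cov0 C {u+1..xs!0 - 1}"
          using Pu nII unfolding P_def by auto
        have c3: "cov0 C {xs!(2*s-1) + 1 .. N - 1}" using True cIe by simp
        have "even (card {1..u-1})" by (rule cov0_even[OF S.pn u1(2)])
        then have "even (u - 1)" by simp
        moreover have "1 \<le> u" using u1(1) by simp
        ultimately have uo: "odd u" by presburger
        have e: "eps' N C = sdiff (sdiff (fsum (dbr N) C) {N}) {1..u}"
          using \<open>C \<notin> Xminus N\<close> Cp cB0 s1 so uo unfolding eps'_def u_def by simp
        have dd: "dd (eps' N C) = R" unfolding e R_def by (rule S.eps_I[OF s1 so NB u1 c3])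
        have cv1: "cov1 C {1..xs!0 - 1}" using True cIe by simp
        have "odd (card {1..xs!0 - 1})" by (rule cov1_odd[OF S.pn cv1]) simp
        then have "odd (xs!0 - 1)" by simp
        then have "even (xs!0)" by presburger
        then have w0: "w (xs!0) = -1" unfolding w_def by simp
        show ?thesis using dd w0 uo so unfolding u_def by simp
      next
        case False
        then have cII2: "caseII N C" using cases by blast
        have u1: "u \<in> {xs!(2*s-1)+1..N-1}" "cov0 C {xs!(2*s-1)+1..u-1}" "cov0 C {u+1..N-1}"
          using Pu False unfolding P_def by auto
        have c0: "cov0 C {1..xs!0 - 1}" using cII2 cIIe by simp
        have "even (card {u+1..N-1})" by (rule cov0_even[OF S.pn u1(3)])
        moreover have "u \<le> N - 1" using u1(1) by simp
        ultimately have ue: "even u" by (rule even_u[OF N])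
        have e: "eps' N C = sdiff (fsum (dbr N) C) {u..N}"
          using False Cp cB0 s1 so ue \<open>C \<notin> Xminus N\<close> unfolding eps'_def u_def by simp
        have dd: "dd (eps' N C) = R" unfolding e R_def by (rule S.eps_II[OF s1 so NB u1 c0])
        have "even (card {1..xs!0 - 1})" by (rule cov0_even[OF S.pn c0])
        then have "even (xs!0 - 1)" by simp
        moreover have "1 \<le> xs!0" using S.nth_range s1 by auto
        ultimately have "odd (xs!0)" by presburger
        then have w0: "w (xs!0) = 1" unfolding w_def by simp
        show ?thesis using dd w0 ue so unfolding u_def by simp
      qed
    qed
  qed
  show ?thesis
    by (rule that[OF sb ist cB0]) (use res R_eq in auto)
qed


lemma step_bound:
  assumes N: "odd N" and C: "C \<in> XX N" and E: "E \<in> span2 C"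
  shows "\<bar>1 - 2 * dd E\<bar> \<le> \<bar>1 - 2 * dd (eps' N C)\<bar>"
proof -
  obtain xs s where sb: "SB N C xs s"
    and dd: "dd (eps' N C) = 2 * (w (xs!0) * (if odd s then int ((s+1) div 2) else - int (s div 2)))"
    and ac: "s = 0 \<or> w (xs!0) = 1 \<or> odd s"
    by (rule XX_main[OF N C])
  interpret S: SB N C xs s by (rule sb)
  obtain K where K: "K \<subseteq> {..<s}" "dd E = 2 * (\<Sum>k\<in>K. w (xs!k))" using S.span_dd[OF E] by blast
  have dE: "dd E = 2 * (w (xs!0) * (\<Sum>k\<in>K. (-1::int)^k))" using K S.sumK_eq by simp
  have vb: "- int (s div 2) \<le> (\<Sum>k\<in>K. (-1::int)^k)" "(\<Sum>k\<in>K. (-1::int)^k) \<le> int ((s+1) div 2)"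
    using alt_bounds[OF K(1)] by auto
  show ?thesis unfolding dE dd by (rule arith_main[OF S.w01 ac vb])
qed

lemma chain:
  assumes N: "odd N" and r: "(step N)\<^sup>*\<^sup>* A C"
  shows "\<bar>1 - 2 * dd (eps' N A)\<bar> \<le> \<bar>1 - 2 * dd (eps' N C)\<bar>"
  using r
proof (induction rule: rtranclp_induct)
  case base then show ?case by simp
next
  case (step y z)
  have z: "z \<in> XX N" and sp: "eps' N y \<in> span2 z" using step.hyps(2) unfolding step_def by auto
  have "\<bar>1 - 2 * dd (eps' N y)\<bar> \<le> \<bar>1 - 2 * dd (eps' N z)\<bar>" by (rule step_bound[OF N z sp])
  then show ?case using step.IH by linarith
qed

lemma gamma_vals:
  assumes N: "odd N" and B: "B \<in> Xtp N t" and t: "t \<noteq> 0"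
  shows "\<bar>1 - 2 * dd (eps' N B)\<bar> = (if t < 0 then -2*t - 1 else 2*t + 1)"
proof -
  have Bp: "B \<in> Xplus N" using B unfolding Xtp_def by blast
  then have BX: "B \<in> XX N" unfolding XX_def by blast
  obtain xs s where "SB N B xs s" "istar N B = xs" and cB0: "card (B0 B) = s"
    and dd: "dd (eps' N B) = 2 * (w (xs!0) * (if odd s then int ((s+1) div 2) else - int (s div 2)))"
    and "s = 0 \<or> w (xs!0) = 1 \<or> odd s"
    and pl: "B \<in> Xplus N \<longrightarrow> 1 \<le> s \<longrightarrow> (odd (uB N B) \<and> w (xs!0) = -1 \<and> odd s)
        \<or> (even (uB N B) \<and> w (xs!0) = 1 \<and> odd s)"
    by (rule XX_main[OF N BX])
  have cases: "(t \<ge> 2 \<and> int s = t - 1 \<and> odd (uB N B)) \<or> (t \<le> -2 \<and> int s = - t - 1 \<and> even (uB N B))"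
    using B t cB0 unfolding Xtp_def by auto
  then have s1: "1 \<le> s" by auto
  have pl': "(odd (uB N B) \<and> w (xs!0) = -1 \<and> odd s) \<or> (even (uB N B) \<and> w (xs!0) = 1 \<and> odd s)"
    using pl Bp s1 by blast
  show ?thesis
  proof (cases "t < 0")
    case True
    then have h: "int s = - t - 1" "even (uB N B)" using cases by auto
    then have w1: "w (xs!0) = 1" and so: "odd s" using pl' by auto
    from so obtain m where m: "s = 2*m+1" by (rule oddE)
    have d: "(s+1) div 2 = m+1" using m by simp
    have "dd (eps' N B) = 2 * int (m+1)" unfolding dd w1 d using so by simp
    then show ?thesis using True h(1) m by simp
  next
    case False
    then have h: "int s = t - 1" "odd (uB N B)" using cases by auto
    then have w1: "w (xs!0) = -1" and so: "odd s" using pl' by auto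
    from so obtain m where m: "s = 2*m+1" by (rule oddE)
    have d: "(s+1) div 2 = m+1" using m by simp
    have "dd (eps' N B) = - 2 * int (m+1)" unfolding dd w1 d using so by simp
    then show ?thesis using False h(1) m by simp
  qed
qed

theorem mainTheorem8:
  fixes N :: nat and t t' :: int and B B' :: "nat set set"
  assumes "N \<ge> 3" and "odd N"
    and "even t" and "even t'"
    and "B' \<in> Xtp N t'" and "B \<in> Xtp N t"
    and "preceq N B' B"
    and "t < 0"
  shows "t' = t \<or> \<bar>t'\<bar> < \<bar>t\<bar>"
proof -
  have r: "(step N)\<^sup>*\<^sup>* B' B" using assms(7) unfolding preceq_def by blast
  have le: "\<bar>1 - 2 * dd (eps' N B')\<bar> \<le> \<bar>1 - 2 * dd (eps' N B)\<bar>" by (rule chain[OF assms(2) r])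
  have gB: "\<bar>1 - 2 * dd (eps' N B)\<bar> = -2*t - 1"
    using gamma_vals[OF assms(2) assms(6)] assms(8) by simp
  show ?thesis
  proof (cases "t' = 0")
    case True
    have "t \<le> -2" using assms(6,8) unfolding Xtp_def by auto
    then show ?thesis using True by simp
  next
    case False
    have gB': "\<bar>1 - 2 * dd (eps' N B')\<bar> = (if t' < 0 then -2*t' - 1 else 2*t' + 1)"
      by (rule gamma_vals[OF assms(2) assms(5) False])
    show ?thesis
    proof (cases "t' < 0")
      case True
      then have "-2*t' - 1 \<le> -2*t - 1" using le gB gB' by simp
      then show ?thesis using True assms(8) by auto
    next
      case f2: False
      then have "2*t' + 1 \<le> -2*t - 1" using le gB gB' by simp
      then show ?thesis using f2 assms(8) by auto
    qed
  qed
qed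

end
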